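(* In every psi-calculus: if $\Psi\rhd R\xrightarrow{\underline M N}R'$, $\mathcal F(R)=(\nu\tilde b_R)\Psi_R$, $C$ is a finite set of names, and $\tilde b_R\#R,N,C$, then there exist an assertion $\Psi'$, a name sequence $\tilde b_{R'}$ and an assertion $\Psi_{R'}$ such that $\mathcal F(R')=(\nu\tilde b_{R'})\Psi_{R'}$, $\Psi_R\otimes\Psi'\simeq\Psi_{R'}$, and $\tilde b_{R'}\#C,R'$.
   Context: Names: a countably infinite set $\mathcal N$ of atomic names. A nominal set is a set equipped with name swapping operations $(a\;b)\cdot X$ satisfying the usual axioms; the support $\mathrm n(X)$ of an element is the set of names affected by swappings, assumed finite; $a \# X$ ("$a$ fresh for $X$") means $a\notin \mathrm n(X)$, and $A\#X$ for a set/sequence $A$ means every element of $A$ is fresh for $X$. A function/relation is equivariant if it commutes with all swappings. $\tilde a$ denotes a finite sequence of names (also used as the set of its elements). Psi-calculus: given by three nominal datatypes $\mathbf T$ (terms, ranged over by $M,N,K,L$), $\mathbf C$ (conditions, $\varphi$), $\mathbf A$ (assertions, $\Psi$), equivariant operators $\leftrightarrow:\mathbf T\times\mathbf T\to\mathbf C$ (channel equivalence), $\otimes:\mathbf A\times\mathbf A\to\mathbf A$ (composition), $\mathbf 1\in\mathbf A$ (unit), $\vdash\subseteq\mathbf A\times\mathbf C$ (entailment), and equivariant substitution functions $X[\tilde a:=\tilde T]$ (substituting terms for distinct names) on $\mathbf T,\mathbf C,\mathbf A$ satisfying: (S1) if $\tilde a\subseteq\mathrm n(X)$ and $b\in\mathrm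 n(\tilde T)$ then $b\in\mathrm n(X[\tilde a:=\tilde T])$; (S2) if $\tilde b\# X,\tilde a$ then $X[\tilde a:=\tilde T]=((\tilde b\;\tilde a)\cdot X)[\tilde b:=\tilde T]$. Assertions are equivalent, $\Psi\simeq\Psi'$, if for all $\varphi$: $\Psi\vdash\varphi\iff\Psi'\vdash\varphi$. Required: $\Psi\vdash M\leftrightarrow N\Rightarrow\Psi\vdash N\leftrightarrow M$; $\Psi\vdash M\leftrightarrow N\wedge\Psi\vdash N\leftrightarrow L\Rightarrow\Psi\vdash M\leftrightarrow L$; $\Psi\simeq\Psi'\Rightarrow\Psi\otimes\Psi''\simeq\Psi'\otimes\Psi''$; $\Psi\otimes\mathbf 1\simeq\Psi$; $(\Psi\otimes\Psi')\otimes\Psi''\simeq\Psi\otimes(\Psi'\otimes\Psi'')$; $\Psi\otimes\Psi'\simeq\Psi'\otimes\Psi$. Frames: $(\nu\tilde b)\Psi$ with $\tilde b$ binding into $\Psi$, identified up to alpha-equivalence; $(\nu\tilde b_1)\Psi_1\otimes(\nu\tilde b_2)\Psi_2=(\nu\tilde b_1\tilde b_2)(\Psi_1\otimes\Psi_2)$ with $\tilde b_1\#\tilde b_2,\Psi_2$ and $\tilde b_2\#\tilde b_1,\Psi_1$. Agents: $\mathbf 0$; $\overline M N.P$ (output); $\underline M(\lambda\tilde x)N.P$ (input, $\tilde x\subseteq\mathrm n(N)$ without duplicates, binding in $N$ and $P$); $\mathbf{case}\ \varphi_1:P_1\,[\!]\cdots[\!]\,\varphi_n:P_n$; $(\nu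 a)P$ (binds $a$); $P\mid Q$; $!P$; $(\!|\Psi|\!)$ (assertion). Agents are identified up to alpha-equivalence. In $!P$ and in each branch $P_i$ of a case, every assertion must occur under an input or output prefix. Substitution on agents is defined homomorphically, avoiding capture. Frame of an agent: $\mathcal F(\mathbf 0)=\mathcal F(\text{input})=\mathcal F(\text{output})=\mathcal F(\mathbf{case}\ldots)=\mathcal F(!P)=\mathbf 1$, $\mathcal F((\!|\Psi|\!))=\Psi$, $\mathcal F(P\mid Q)=\mathcal F(P)\otimes\mathcal F(Q)$, $\mathcal F((\nu b)P)=(\nu b)\mathcal F(P)$. Actions: output $\overline M(\nu\tilde a)N$ with $\tilde a\subseteq\mathrm n(N)$, input $\underline M N$, and $\tau$; $\mathrm{bn}(\overline M(\nu\tilde a)N)=\tilde a$, otherwise $\emptyset$; $\mathrm n(\tau)=\emptyset$, else $\mathrm n(M)\cup\mathrm n(N)$. Transitions $\Psi\rhd P\xrightarrow{\alpha}P'$ are the least relation closed under (symmetric versions of Com and Par included): In: $\Psi\vdash M\leftrightarrow K$ implies $\Psi\rhd\underline M(\lambda\tilde y)N.P\xrightarrow{\underline K\,N[\tilde y:=\tilde L]}P[\tilde y:=\tilde L]$ for any $\tilde L$. Out: $\Psi\vdash M\leftrightarrow K$ implies $\Psi\rhd\overline MN.P\xrightarrow{\overline KN}P$. Case: $\Psi\rhd P_i\xrightarrow\alpha P'$ and $\Psi\vdash\varphi_i$ imply $\Psi\rhd\mathbf{case}\ \tilde\varphi:\tilde P\xrightarrow\alpha P'$. Com: with $\mathcal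 F(P)=(\nu\tilde b_P)\Psi_P$, $\mathcal F(Q)=(\nu\tilde b_Q)\Psi_Q$, $\tilde b_P\#\Psi,\tilde b_Q,Q,M,P$, $\tilde b_Q\#\Psi,\tilde b_P,P,K,Q$: if $\Psi_Q\otimes\Psi\rhd P\xrightarrow{\overline M(\nu\tilde a)N}P'$, $\Psi_P\otimes\Psi\rhd Q\xrightarrow{\underline KN}Q'$, $\Psi\otimes\Psi_P\otimes\Psi_Q\vdash M\leftrightarrow K$ and $\tilde a\#Q$, then $\Psi\rhd P\mid Q\xrightarrow\tau(\nu\tilde a)(P'\mid Q')$. Par: with $\mathcal F(Q)=(\nu\tilde b_Q)\Psi_Q$, $\tilde b_Q\#\Psi,P,\alpha$: if $\Psi_Q\otimes\Psi\rhd P\xrightarrow\alpha P'$ and $\mathrm{bn}(\alpha)\#Q$ then $\Psi\rhd P\mid Q\xrightarrow\alpha P'\mid Q$. Scope: $\Psi\rhd P\xrightarrow\alpha P'$, $b\#\alpha,\Psi$ imply $\Psi\rhd(\nu b)P\xrightarrow\alpha(\nu b)P'$. Open: $\Psi\rhd P\xrightarrow{\overline M(\nu\tilde a)N}P'$, $b\#\tilde a,\Psi,M$, $b\in\mathrm n(N)$ imply $\Psi\rhd(\nu b)P\xrightarrow{\overline M(\nu\tilde a\cup\{b\})N}P'$. Rep: $\Psi\rhd P\mid !P\xrightarrow\alpha P'$ implies $\Psi\rhd !P\xrightarrow\alpha P'$. $\mathrm{bn}(\alpha)$ binds into the object and derivative; transitions are identified up to alpha-equivalence. *)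

theory Defs
  imports Main
begin

type_synonym name = nat

definition nswap :: "name \<Rightarrow> name \<Rightarrow> name \<Rightarrow> name" where
  "nswap a b c = (if c = a then b else if c = b then a else c)"

definition supp :: "(name \<Rightarrow> name \<Rightarrow> 'x \<Rightarrow> 'x) \<Rightarrow> 'x \<Rightarrow> name set" where
  "supp sw x = {a. infinite {b. sw a b x \<noteq> x}}"

definition nominal_set :: "(name \<Rightarrow> name \<Rightarrow> 'x \<Rightarrow> 'x) \<Rightarrow> bool" where
  "nominal_set sw \<longleftrightarrow>
     (\<forall>a x. sw a a x = x) \<and>
     (\<forall>a b x. sw a b (sw a b x) = x) \<and>
     (\<forall>a b x. sw a b x = sw b a x) \<and>
     (\<forall>a b c d x. sw a b (sw c d x) = sw (nswap a b c) (nswap a b d) (sw a b x)) \<and>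
     (\<forall>x. finite (supp sw x))"

fun swap_seq :: "(name \<Rightarrow> name \<Rightarrow> 'x \<Rightarrow> 'x) \<Rightarrow> name list \<Rightarrow> name list \<Rightarrow> 'x \<Rightarrow> 'x" where
  "swap_seq sw (b # bs) (a # as) x = sw b a (swap_seq sw bs as x)"
| "swap_seq sw _ _ x = x"

record ('t, 'c, 'a) psi =
  swT :: "name \<Rightarrow> name \<Rightarrow> 't \<Rightarrow> 't"
  swC :: "name \<Rightarrow> name \<Rightarrow> 'c \<Rightarrow> 'c"
  swA :: "name \<Rightarrow> name \<Rightarrow> 'a \<Rightarrow> 'a"
  chaneq :: "'t \<Rightarrow> 't \<Rightarrow> 'c"
  comp :: "'a \<Rightarrow> 'a \<Rightarrow> 'a"
  unitA :: 'a
  ent :: "'a \<Rightarrow> 'c \<Rightarrow> bool"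
  substT :: "'t \<Rightarrow> name list \<Rightarrow> 't list \<Rightarrow> 't"
  substC :: "'c \<Rightarrow> name list \<Rightarrow> 't list \<Rightarrow> 'c"
  substA :: "'a \<Rightarrow> name list \<Rightarrow> 't list \<Rightarrow> 'a"

definition suppTs :: "('t, 'c, 'a, 'z) psi_scheme \<Rightarrow> 't list \<Rightarrow> name set" where
  "suppTs Pc Ts = (\<Union>T\<in>set Ts. supp (swT Pc) T)"

definition aeq :: "('t, 'c, 'a, 'z) psi_scheme \<Rightarrow> 'a \<Rightarrow> 'a \<Rightarrow> bool" where
  "aeq Pc \<Psi> \<Psi>' \<longleftrightarrow> (\<forall>\<phi>. ent Pc \<Psi> \<phi> \<longleftrightarrow> ent Pc \<Psi>' \<phi>)"

text \<open>Requirements on a substitution function on a nominal datatype X (S1, S2, equivariance),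
  for substitutions of terms for sequences of distinct names (of matching length).\<close>
definition subst_ok :: "('t, 'c, 'a, 'z) psi_scheme \<Rightarrow> (name \<Rightarrow> name \<Rightarrow> 'x \<Rightarrow> 'x)
    \<Rightarrow> ('x \<Rightarrow> name list \<Rightarrow> 't list \<Rightarrow> 'x) \<Rightarrow> bool" where
  "subst_ok Pc sw sb \<longleftrightarrow>
     (\<forall>a b X xs Ts. sw a b (sb X xs Ts) = sb (sw a b X) (map (nswap a b) xs) (map (swT Pc a b) Ts)) \<and>
     (\<forall>X xs Ts b. distinct xs \<and> length xs = length Ts \<and> set xs \<subseteq> supp sw X \<and> b \<in> suppTs Pc Ts
         \<longrightarrow> b \<in> supp sw (sb X xs Ts)) \<and>
     (\<forall>X xs Ts bs. distinct xs \<and> length xs = length Ts \<and> distinct bs \<and> length bs = length xs \<and>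
         set bs \<inter> (supp sw X \<union> set xs) = {}
         \<longrightarrow> sb X xs Ts = sb (swap_seq sw bs xs X) bs Ts)"

definition psi_calculus :: "('t, 'c, 'a, 'z) psi_scheme \<Rightarrow> bool" where
  "psi_calculus Pc \<longleftrightarrow>
     nominal_set (swT Pc) \<and> nominal_set (swC Pc) \<and> nominal_set (swA Pc) \<and>
     (\<forall>a b M N. swC Pc a b (chaneq Pc M N) = chaneq Pc (swT Pc a b M) (swT Pc a b N)) \<and>
     (\<forall>a b \<Psi> \<Psi>'. swA Pc a b (comp Pc \<Psi> \<Psi>') = comp Pc (swA Pc a b \<Psi>) (swA Pc a b \<Psi>')) \<and>
     (\<forall>a b. swA Pc a b (unitA Pc) = unitA Pc) \<and>
     (\<forall>a b \<Psi> \<phi>. ent Pc \<Psi> \<phi> \<longleftrightarrow> ent Pc (swA Pc a b \<Psi>) (swC Pc a b \<phi>)) \<and>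
     subst_ok Pc (swT Pc) (substT Pc) \<and> subst_ok Pc (swC Pc) (substC Pc) \<and>
     subst_ok Pc (swA Pc) (substA Pc) \<and>
     (\<forall>\<Psi> M N. ent Pc \<Psi> (chaneq Pc M N) \<longrightarrow> ent Pc \<Psi> (chaneq Pc N M)) \<and>
     (\<forall>\<Psi> M N L. ent Pc \<Psi> (chaneq Pc M N) \<and> ent Pc \<Psi> (chaneq Pc N L) \<longrightarrow> ent Pc \<Psi> (chaneq Pc M L)) \<and>
     (\<forall>\<Psi> \<Psi>' \<Psi>''. aeq Pc \<Psi> \<Psi>' \<longrightarrow> aeq Pc (comp Pc \<Psi> \<Psi>'') (comp Pc \<Psi>' \<Psi>'')) \<and>
     (\<forall>\<Psi>. aeq Pc (comp Pc \<Psi> (unitA Pc)) \<Psi>) \<and>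
     (\<forall>\<Psi> \<Psi>' \<Psi>''. aeq Pc (comp Pc (comp Pc \<Psi> \<Psi>') \<Psi>'') (comp Pc \<Psi> (comp Pc \<Psi>' \<Psi>''))) \<and>
     (\<forall>\<Psi> \<Psi>'. aeq Pc (comp Pc \<Psi> \<Psi>') (comp Pc \<Psi>' \<Psi>))"

section \<open>Agents (raw syntax; identified up to alpha-equivalence below)\<close>

datatype ('t, 'c, 'a) agent =
    PNil
  | POut 't 't "('t, 'c, 'a) agent"
  | PIn 't "name list" 't "('t, 'c, 'a) agent"   \<comment> \<open>\<open>M(\<lambda>xs)N.P\<close>, xs binds in N and P\<close>
  | PCase "('c \<times> ('t, 'c, 'a) agent) list"
  | PRes name "('t, 'c, 'a) agent"                \<comment> \<open>\<open>(\<nu>a)P\<close>, binds a\<close>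
  | PPar "('t, 'c, 'a) agent" "('t, 'c, 'a) agent"
  | PBang "('t, 'c, 'a) agent"
  | PAssert 'a

primrec swap_agent :: "('t, 'c, 'a, 'z) psi_scheme \<Rightarrow> name \<Rightarrow> name \<Rightarrow> ('t, 'c, 'a) agent \<Rightarrow> ('t, 'c, 'a) agent" where
  "swap_agent Pc a b PNil = PNil"
| "swap_agent Pc a b (POut M N P) = POut (swT Pc a b M) (swT Pc a b N) (swap_agent Pc a b P)"
| "swap_agent Pc a b (PIn M xs N P) = PIn (swT Pc a b M) (map (nswap a b) xs) (swT Pc a b N) (swap_agent Pc a b P)"
| "swap_agent Pc a b (PCase cs) = PCase (map (map_prod (swC Pc a b) (swap_agent Pc a b)) cs)"
| "swap_agent Pc a b (PRes x P) = PRes (nswap a b x) (swap_agent Pc a b P)"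
| "swap_agent Pc a b (PPar P Q) = PPar (swap_agent Pc a b P) (swap_agent Pc a b Q)"
| "swap_agent Pc a b (PBang P) = PBang (swap_agent Pc a b P)"
| "swap_agent Pc a b (PAssert \<Psi>) = PAssert (swA Pc a b \<Psi>)"

text \<open>Free names (= support of the alpha-equivalence class)\<close>
primrec fn :: "('t, 'c, 'a, 'z) psi_scheme \<Rightarrow> ('t, 'c, 'a) agent \<Rightarrow> name set" where
  "fn Pc PNil = {}"
| "fn Pc (POut M N P) = supp (swT Pc) M \<union> supp (swT Pc) N \<union> fn Pc P"
| "fn Pc (PIn M xs N P) = supp (swT Pc) M \<union> ((supp (swT Pc) N \<union> fn Pc P) - set xs)"
| "fn Pc (PCase cs) = \<Union> (set (map (\<lambda>p. fst p \<union> snd p) (map (map_prod (supp (swC Pc)) (fn Pc)) cs)))"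
| "fn Pc (PRes x P) = fn Pc P - {x}"
| "fn Pc (PPar P Q) = fn Pc P \<union> fn Pc Q"
| "fn Pc (PBang P) = fn Pc P"
| "fn Pc (PAssert \<Psi>) = supp (swA Pc) \<Psi>"

primrec guarded :: "('t, 'c, 'a) agent \<Rightarrow> bool" where
  "guarded PNil = True"
| "guarded (POut M N P) = True"
| "guarded (PIn M xs N P) = True"
| "guarded (PCase cs) = (\<forall>p\<in>set (map (map_prod id guarded) cs). snd p)"
| "guarded (PRes x P) = guarded P"
| "guarded (PPar P Q) = (guarded P \<and> guarded Q)"
| "guarded (PBang P) = guarded P"
| "guarded (PAssert \<Psi>) = False"

primrec wf_agent :: "('t, 'c, 'a, 'z) psi_scheme \<Rightarrow> ('t, 'c, 'a) agent \<Rightarrow> bool" where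
  "wf_agent Pc PNil = True"
| "wf_agent Pc (POut M N P) = wf_agent Pc P"
| "wf_agent Pc (PIn M xs N P) = (distinct xs \<and> set xs \<subseteq> supp (swT Pc) N \<and> wf_agent Pc P)"
| "wf_agent Pc (PCase cs) = ((\<forall>p\<in>set (map (map_prod id (wf_agent Pc)) cs). snd p) \<and>
                             (\<forall>p\<in>set cs. guarded (snd p)))"
| "wf_agent Pc (PRes x P) = wf_agent Pc P"
| "wf_agent Pc (PPar P Q) = (wf_agent Pc P \<and> wf_agent Pc Q)"
| "wf_agent Pc (PBang P) = (wf_agent Pc P \<and> guarded P)"
| "wf_agent Pc (PAssert \<Psi>) = True"

inductive alpha :: "('t, 'c, 'a, 'z) psi_scheme \<Rightarrow> ('t, 'c, 'a) agent \<Rightarrow> ('t, 'c, 'a) agent \<Rightarrow> bool"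
  for Pc where
  a_refl: "alpha Pc P P"
| a_sym: "alpha Pc P Q \<Longrightarrow> alpha Pc Q P"
| a_trans: "alpha Pc P Q \<Longrightarrow> alpha Pc Q R \<Longrightarrow> alpha Pc P R"
| a_swap: "a \<notin> fn Pc P \<Longrightarrow> b \<notin> fn Pc P \<Longrightarrow> alpha Pc P (swap_agent Pc a b P)"
| a_out: "alpha Pc P Q \<Longrightarrow> alpha Pc (POut M N P) (POut M N Q)"
| a_in: "alpha Pc P Q \<Longrightarrow> alpha Pc (PIn M xs N P) (PIn M xs N Q)"
| a_case: "length cs = length ds \<Longrightarrow>
     \<forall>i<length cs. fst (cs ! i) = fst (ds ! i) \<and> alpha Pc (snd (cs ! i)) (snd (ds ! i)) \<Longrightarrow>
     alpha Pc (PCase cs) (PCase ds)"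
| a_res: "alpha Pc P Q \<Longrightarrow> alpha Pc (PRes x P) (PRes x Q)"
| a_par: "alpha Pc P P' \<Longrightarrow> alpha Pc Q Q' \<Longrightarrow> alpha Pc (PPar P Q) (PPar P' Q')"
| a_bang: "alpha Pc P Q \<Longrightarrow> alpha Pc (PBang P) (PBang Q)"

text \<open>A frame \<open>(\<nu>bs)\<Psi>\<close>, with bs binding into \<Psi>, up to alpha-equivalence.\<close>
type_synonym 'a frame = "name list \<times> 'a"

definition fn_frame :: "('t, 'c, 'a, 'z) psi_scheme \<Rightarrow> 'a frame \<Rightarrow> name set" where
  "fn_frame Pc F = supp (swA Pc) (snd F) - set (fst F)"

definition swap_frame :: "('t, 'c, 'a, 'z) psi_scheme \<Rightarrow> name \<Rightarrow> name \<Rightarrow> 'a frame \<Rightarrow> 'a frame" where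
  "swap_frame Pc a b F = (map (nswap a b) (fst F), swA Pc a b (snd F))"

inductive frame_alpha :: "('t, 'c, 'a, 'z) psi_scheme \<Rightarrow> 'a frame \<Rightarrow> 'a frame \<Rightarrow> bool"
  for Pc where
  fa_refl: "frame_alpha Pc F F"
| fa_sym: "frame_alpha Pc F G \<Longrightarrow> frame_alpha Pc G F"
| fa_trans: "frame_alpha Pc F G \<Longrightarrow> frame_alpha Pc G H \<Longrightarrow> frame_alpha Pc F H"
| fa_swap: "a \<notin> fn_frame Pc F \<Longrightarrow> b \<notin> fn_frame Pc F \<Longrightarrow> frame_alpha Pc F (swap_frame Pc a b F)"

text \<open>\<open>frame_of Pc P F\<close>: F is (a representative of) the frame \<open>\<F>(P)\<close>.\<close>
inductive frame_of :: "('t, 'c, 'a, 'z) psi_scheme \<Rightarrow> ('t, 'c, 'a) agent \<Rightarrow> 'a frame \<Rightarrow> bool"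
  for Pc where
  f_nil: "frame_of Pc PNil ([], unitA Pc)"
| f_out: "frame_of Pc (POut M N P) ([], unitA Pc)"
| f_in: "frame_of Pc (PIn M xs N P) ([], unitA Pc)"
| f_case: "frame_of Pc (PCase cs) ([], unitA Pc)"
| f_bang: "frame_of Pc (PBang P) ([], unitA Pc)"
| f_assert: "frame_of Pc (PAssert \<Psi>) ([], \<Psi>)"
| f_res: "frame_of Pc P (bs, \<Psi>) \<Longrightarrow> frame_of Pc (PRes x P) (x # bs, \<Psi>)"
| f_par: "frame_of Pc P (b1, \<Psi>1) \<Longrightarrow> frame_of Pc Q (b2, \<Psi>2) \<Longrightarrow>
     set b1 \<inter> (set b2 \<union> supp (swA Pc) \<Psi>2) = {} \<Longrightarrow>
     set b2 \<inter> (set b1 \<union> supp (swA Pc) \<Psi>1) = {} \<Longrightarrow>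
     frame_of Pc (PPar P Q) (b1 @ b2, comp Pc \<Psi>1 \<Psi>2)"
| f_alpha: "frame_of Pc P F \<Longrightarrow> frame_alpha Pc F G \<Longrightarrow> frame_of Pc P G"
| f_alpha_agent: "alpha Pc P Q \<Longrightarrow> frame_of Pc Q F \<Longrightarrow> frame_of Pc P F"

section \<open>Capture-avoiding substitution on agents (as a relation, up to alpha)\<close>

inductive agent_subst :: "('t, 'c, 'a, 'z) psi_scheme \<Rightarrow> name list \<Rightarrow> 't list \<Rightarrow>
    ('t, 'c, 'a) agent \<Rightarrow> ('t, 'c, 'a) agent \<Rightarrow> bool"
  for Pc xs Ts where
  s_nil: "agent_subst Pc xs Ts PNil PNil"
| s_out: "agent_subst Pc xs Ts P P' \<Longrightarrow>
     agent_subst Pc xs Ts (POut M N P) (POut (substT Pc M xs Ts) (substT Pc N xs Ts) P')"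
| s_in: "set ys \<inter> (set xs \<union> suppTs Pc Ts) = {} \<Longrightarrow> agent_subst Pc xs Ts P P' \<Longrightarrow>
     agent_subst Pc xs Ts (PIn M ys N P) (PIn (substT Pc M xs Ts) ys (substT Pc N xs Ts) P')"
| s_case: "length cs = length ds \<Longrightarrow>
     \<forall>i<length cs. fst (ds ! i) = substC Pc (fst (cs ! i)) xs Ts \<and>
                   agent_subst Pc xs Ts (snd (cs ! i)) (snd (ds ! i)) \<Longrightarrow>
     agent_subst Pc xs Ts (PCase cs) (PCase ds)"
| s_res: "x \<notin> set xs \<Longrightarrow> x \<notin> suppTs Pc Ts \<Longrightarrow> agent_subst Pc xs Ts P P' \<Longrightarrow>
     agent_subst Pc xs Ts (PRes x P) (PRes x P')"
| s_par: "agent_subst Pc xs Ts P P' \<Longrightarrow> agent_subst Pc xs Ts Q Q' \<Longrightarrow>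
     agent_subst Pc xs Ts (PPar P Q) (PPar P' Q')"
| s_bang: "agent_subst Pc xs Ts P P' \<Longrightarrow> agent_subst Pc xs Ts (PBang P) (PBang P')"
| s_assert: "agent_subst Pc xs Ts (PAssert \<Psi>) (PAssert (substA Pc \<Psi> xs Ts))"
| s_alpha: "alpha Pc P Q \<Longrightarrow> agent_subst Pc xs Ts Q Q' \<Longrightarrow> agent_subst Pc xs Ts P Q'"

datatype 't action =
    AOut 't "name list" 't   \<comment> \<open>\<open>M\<nu>as N\<close>, as bind into N and the derivative\<close>
  | AIn 't 't
  | ATau

primrec names_act :: "('t, 'c, 'a, 'z) psi_scheme \<Rightarrow> 't action \<Rightarrow> name set" where
  "names_act Pc (AOut M as N) = supp (swT Pc) M \<union> supp (swT Pc) N"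
| "names_act Pc (AIn M N) = supp (swT Pc) M \<union> supp (swT Pc) N"
| "names_act Pc ATau = {}"

primrec bn :: "'t action \<Rightarrow> name set" where
  "bn (AOut M as N) = set as"
| "bn (AIn M N) = {}"
| "bn ATau = {}"

primrec swap_act :: "('t, 'c, 'a, 'z) psi_scheme \<Rightarrow> name \<Rightarrow> name \<Rightarrow> 't action \<Rightarrow> 't action" where
  "swap_act Pc a b (AOut M as N) = AOut (swT Pc a b M) (map (nswap a b) as) (swT Pc a b N)"
| "swap_act Pc a b (AIn M N) = AIn (swT Pc a b M) (swT Pc a b N)"
| "swap_act Pc a b ATau = ATau"

text \<open>Residuals (action, derivative); the bound names of the action bind into object and derivative.\<close>
definition fn_res :: "('t, 'c, 'a, 'z) psi_scheme \<Rightarrow> 't action \<times> ('t, 'c, 'a) agent \<Rightarrow> name set" where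
  "fn_res Pc r = (names_act Pc (fst r) \<union> fn Pc (snd r)) - bn (fst r)"

definition swap_res :: "('t, 'c, 'a, 'z) psi_scheme \<Rightarrow> name \<Rightarrow> name \<Rightarrow>
    't action \<times> ('t, 'c, 'a) agent \<Rightarrow> 't action \<times> ('t, 'c, 'a) agent" where
  "swap_res Pc a b r = (swap_act Pc a b (fst r), swap_agent Pc a b (snd r))"

inductive resid_alpha :: "('t, 'c, 'a, 'z) psi_scheme \<Rightarrow> 't action \<times> ('t, 'c, 'a) agent \<Rightarrow>
    't action \<times> ('t, 'c, 'a) agent \<Rightarrow> bool"
  for Pc where
  ra_agent: "alpha Pc P Q \<Longrightarrow> resid_alpha Pc (\<alpha>, P) (\<alpha>, Q)"
| ra_sym: "resid_alpha Pc r s \<Longrightarrow> resid_alpha Pc s r"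
| ra_trans: "resid_alpha Pc r s \<Longrightarrow> resid_alpha Pc s t \<Longrightarrow> resid_alpha Pc r t"
| ra_swap: "a \<notin> fn_res Pc r \<Longrightarrow> b \<notin> fn_res Pc r \<Longrightarrow> resid_alpha Pc r (swap_res Pc a b r)"

text \<open>\<open>psi_trans Pc \<Psi> P \<alpha> P'\<close>: \<open>\<Psi> \<rhd> P \<longrightarrow>\<alpha> P'\<close>.\<close>
inductive psi_trans :: "('t, 'c, 'a, 'z) psi_scheme \<Rightarrow> 'a \<Rightarrow> ('t, 'c, 'a) agent \<Rightarrow> 't action \<Rightarrow>
    ('t, 'c, 'a) agent \<Rightarrow> bool"
  for Pc where
  t_in: "ent Pc \<Psi> (chaneq Pc M K) \<Longrightarrow> length Ls = length ys \<Longrightarrow> agent_subst Pc ys Ls P P' \<Longrightarrow>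
     psi_trans Pc \<Psi> (PIn M ys N P) (AIn K (substT Pc N ys Ls)) P'"
| t_out: "ent Pc \<Psi> (chaneq Pc M K) \<Longrightarrow> psi_trans Pc \<Psi> (POut M N P) (AOut K [] N) P"
| t_case: "i < length cs \<Longrightarrow> psi_trans Pc \<Psi> (snd (cs ! i)) \<alpha> P' \<Longrightarrow> ent Pc \<Psi> (fst (cs ! i)) \<Longrightarrow>
     psi_trans Pc \<Psi> (PCase cs) \<alpha> P'"
| t_com: "frame_of Pc P (bP, \<Psi>P) \<Longrightarrow> frame_of Pc Q (bQ, \<Psi>Q) \<Longrightarrow>
     set bP \<inter> (supp (swA Pc) \<Psi> \<union> set bQ \<union> fn Pc Q \<union> supp (swT Pc) M \<union> fn Pc P) = {} \<Longrightarrow>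
     set bQ \<inter> (supp (swA Pc) \<Psi> \<union> set bP \<union> fn Pc P \<union> supp (swT Pc) K \<union> fn Pc Q) = {} \<Longrightarrow>
     psi_trans Pc (comp Pc \<Psi>Q \<Psi>) P (AOut M as N) P' \<Longrightarrow>
     psi_trans Pc (comp Pc \<Psi>P \<Psi>) Q (AIn K N) Q' \<Longrightarrow>
     ent Pc (comp Pc (comp Pc \<Psi> \<Psi>P) \<Psi>Q) (chaneq Pc M K) \<Longrightarrow>
     set as \<inter> fn Pc Q = {} \<Longrightarrow>
     psi_trans Pc \<Psi> (PPar P Q) ATau (foldr PRes as (PPar P' Q'))"
| t_com2: "frame_of Pc P (bP, \<Psi>P) \<Longrightarrow> frame_of Pc Q (bQ, \<Psi>Q) \<Longrightarrow>
     set bP \<inter> (supp (swA Pc) \<Psi> \<union> set bQ \<union> fn Pc Q \<union> supp (swT Pc) K \<union> fn Pc P) = {} \<Longrightarrow>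
     set bQ \<inter> (supp (swA Pc) \<Psi> \<union> set bP \<union> fn Pc P \<union> supp (swT Pc) M \<union> fn Pc Q) = {} \<Longrightarrow>
     psi_trans Pc (comp Pc \<Psi>Q \<Psi>) P (AIn K N) P' \<Longrightarrow>
     psi_trans Pc (comp Pc \<Psi>P \<Psi>) Q (AOut M as N) Q' \<Longrightarrow>
     ent Pc (comp Pc (comp Pc \<Psi> \<Psi>Q) \<Psi>P) (chaneq Pc M K) \<Longrightarrow>
     set as \<inter> fn Pc P = {} \<Longrightarrow>
     psi_trans Pc \<Psi> (PPar P Q) ATau (foldr PRes as (PPar P' Q'))"
| t_par: "frame_of Pc Q (bQ, \<Psi>Q) \<Longrightarrow>
     set bQ \<inter> (supp (swA Pc) \<Psi> \<union> fn Pc P \<union> names_act Pc \<alpha>) = {} \<Longrightarrow>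
     psi_trans Pc (comp Pc \<Psi>Q \<Psi>) P \<alpha> P' \<Longrightarrow> bn \<alpha> \<inter> fn Pc Q = {} \<Longrightarrow>
     psi_trans Pc \<Psi> (PPar P Q) \<alpha> (PPar P' Q)"
| t_par2: "frame_of Pc P (bP, \<Psi>P) \<Longrightarrow>
     set bP \<inter> (supp (swA Pc) \<Psi> \<union> fn Pc Q \<union> names_act Pc \<alpha>) = {} \<Longrightarrow>
     psi_trans Pc (comp Pc \<Psi>P \<Psi>) Q \<alpha> Q' \<Longrightarrow> bn \<alpha> \<inter> fn Pc P = {} \<Longrightarrow>
     psi_trans Pc \<Psi> (PPar P Q) \<alpha> (PPar P Q')"
| t_scope: "psi_trans Pc \<Psi> P \<alpha> P' \<Longrightarrow> b \<notin> names_act Pc \<alpha> \<Longrightarrow> b \<notin> supp (swA Pc) \<Psi> \<Longrightarrow>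
     psi_trans Pc \<Psi> (PRes b P) \<alpha> (PRes b P')"
| t_open: "psi_trans Pc \<Psi> P (AOut M (xs @ ys) N) P' \<Longrightarrow> b \<notin> set (xs @ ys) \<Longrightarrow>
     b \<notin> supp (swA Pc) \<Psi> \<Longrightarrow> b \<notin> supp (swT Pc) M \<Longrightarrow> b \<in> supp (swT Pc) N \<Longrightarrow>
     psi_trans Pc \<Psi> (PRes b P) (AOut M (xs @ b # ys) N) P'"
| t_rep: "psi_trans Pc \<Psi> (PPar P (PBang P)) \<alpha> P' \<Longrightarrow> psi_trans Pc \<Psi> (PBang P) \<alpha> P'"
| t_alpha: "psi_trans Pc \<Psi> P \<alpha> P' \<Longrightarrow> alpha Pc P Q \<Longrightarrow> resid_alpha Pc (\<alpha>, P') (\<beta>, Q') \<Longrightarrow>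
     psi_trans Pc \<Psi> Q \<beta> Q'"

end

theory Submission
  imports Defs
begin

lemma nswap_simps[simp]:
  "nswap a b a = b" "nswap a b b = a" "c \<noteq> a \<Longrightarrow> c \<noteq> b \<Longrightarrow> nswap a b c = c"
  by (auto simp: nswap_def)

lemma nswap_invol[simp]: "nswap a b (nswap a b c) = c"
  by (auto simp: nswap_def)

lemma nswap_inj: "inj (nswap a b)"
  by (metis injI nswap_invol)

lemma nswap_eq_iff[simp]: "(nswap a b x = nswap a b y) = (x = y)"
  by (metis nswap_invol)

lemma nswap_comp: "nswap a b (nswap c d x) = nswap (nswap a b c) (nswap a b d) (nswap a b x)"
  by (auto simp: nswap_def)

lemma nswap_sym: "nswap a b = nswap b a"
  by (auto simp: nswap_def fun_eq_iff)

lemma nswap_same[simp]: "nswap a a x = x"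
  by (auto simp: nswap_def)

lemma nswap_image_invol[simp]: "nswap a b ` nswap a b ` A = A"
  by (force simp: image_iff)

lemma nswap_in_image: "(x \<in> nswap a b ` A) = (nswap a b x \<in> A)"
  by (metis image_iff nswap_invol)

lemma nswap_image_fix: "a \<notin> A \<Longrightarrow> b \<notin> A \<Longrightarrow> nswap a b ` A = A"
  by (auto simp: nswap_in_image nswap_def)

lemma nswap_image_fix': "a \<notin> A \<Longrightarrow> b \<notin> A \<Longrightarrow> nswap a b ` (A \<inter> B) = A \<inter> nswap a b ` B"
  by (auto simp: nswap_in_image nswap_def)

lemma map_nswap_fix: "a \<notin> set xs \<Longrightarrow> b \<notin> set xs \<Longrightarrow> map (nswap a b) xs = xs"
  by (induct xs) auto

section \<open>Nominal sets\<close>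

locale nomset =
  fixes sw :: "name \<Rightarrow> name \<Rightarrow> 'x \<Rightarrow> 'x"
  assumes nom: "nominal_set sw"
begin

lemma sw_id[simp]: "sw a a x = x" using nom by (simp add: nominal_set_def)
lemma sw_invol[simp]: "sw a b (sw a b x) = x" using nom by (simp add: nominal_set_def)
lemma sw_sym: "sw a b x = sw b a x" using nom by (simp add: nominal_set_def)
lemma sw_comp: "sw a b (sw c d x) = sw (nswap a b c) (nswap a b d) (sw a b x)"
  using nom by (simp add: nominal_set_def)
lemma fin_supp[simp]: "finite (supp sw x)" using nom by (simp add: nominal_set_def)

lemma sw_eq_iff[simp]: "(sw a b x = sw a b y) = (x = y)"
  by (metis sw_invol)

lemma fresh_swap: assumes "a \<notin> supp sw x" "b \<notin> supp sw x" shows "sw a b x = x"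
proof (cases "a = b")
  case True then show ?thesis by simp
next
  case False
  have f1: "finite {c. sw a c x \<noteq> x}" using assms(1) by (simp add: supp_def)
  have f2: "finite {c. sw b c x \<noteq> x}" using assms(2) by (simp add: supp_def)
  have "finite ({c. sw a c x \<noteq> x} \<union> {c. sw b c x \<noteq> x} \<union> {a, b})" using f1 f2 by simp
  then obtain c where c: "c \<notin> {c. sw a c x \<noteq> x} \<union> {c. sw b c x \<noteq> x} \<union> {a, b}"
    by (metis ex_new_if_finite infinite_UNIV_nat)
  then have ca: "sw a c x = x" and cb: "sw b c x = x" and "c \<noteq> a" "c \<noteq> b" by auto
  have "sw a c (sw b c (sw a c x)) = sw b a (sw a c (sw a c x))"
    using sw_comp[of a c b c] False \<open>c \<noteq> a\<close> \<open>c \<noteq> b\<close> by (simp add: nswap_def)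
  then have "sw b a x = x" using ca cb by simp
  then show ?thesis by (simp add: sw_sym)
qed

lemma supp_swap: "supp sw (sw a b x) = nswap a b ` supp sw x"
proof -
  have key: "d \<in> supp sw (sw a b x) \<longleftrightarrow> nswap a b d \<in> supp sw x" for d
  proof -
    define p where "p = nswap a b"
    define S where "S = {c. sw (p d) c x \<noteq> x}"
    have eq: "{c. sw d c (sw a b x) \<noteq> sw a b x} = p -` S"
    proof -
      have "sw d c (sw a b x) = sw a b (sw (p d) (p c) x)" for c
        using sw_comp[of a b "p d" "p c" x] by (simp add: p_def)
      then show ?thesis by (auto simp: S_def)
    qed
    have fin: "finite (p -` S) = finite S"
    proof
      assume "finite (p -` S)"
      then have "finite (p ` (p -` S))" by (rule finite_imageI)
      moreover have "p ` (p -` S) = S" unfolding p_def proof (intro equalityI subsetI) fix y assume "y \<in> S" then show "y \<in> nswap a b ` nswap a b -` S" by (metis image_eqI nswap_invol vimageI) qed auto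
      ultimately show "finite S" by simp
    next
      assume "finite S" then show "finite (p -` S)" using nswap_inj finite_vimageI p_def by blast
    qed
    show ?thesis unfolding supp_def mem_Collect_eq eq using fin unfolding S_def p_def by blast
  qed
  show ?thesis by (auto simp: key nswap_in_image)
qed

lemma supp_swap_iff: "(d \<in> supp sw (sw a b x)) = (nswap a b d \<in> supp sw x)"
  by (simp add: supp_swap nswap_in_image)

lemma swap_fresh_supp: "a \<notin> supp sw x \<Longrightarrow> b \<notin> supp sw x \<Longrightarrow> supp sw (sw a b x) = supp sw x"
  by (simp add: fresh_swap)

end



context nomset begin
lemma supp_le: assumes "finite A" "\<And>c d. c \<notin> A \<Longrightarrow> d \<notin> A \<Longrightarrow> sw c d x = x"
  shows "supp sw x \<subseteq> A"
proof
  fix c assume c: "c \<in> supp sw x"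
  show "c \<in> A"
  proof (rule ccontr)
    assume "c \<notin> A"
    then have "{d. sw c d x \<noteq> x} \<subseteq> A" using assms(2) by auto
    then have "finite {d. sw c d x \<noteq> x}" using assms(1) finite_subset by blast
    then show False using c by (simp add: supp_def)
  qed
qed
end

locale psi_loc =
  fixes Pc :: "('t, 'c, 'a, 'z) psi_scheme"
  assumes psi: "psi_calculus Pc"
begin

sublocale T: nomset "swT Pc" using psi by (simp add: psi_calculus_def nomset_def)
sublocale C: nomset "swC Pc" using psi by (simp add: psi_calculus_def nomset_def)
sublocale A: nomset "swA Pc" using psi by (simp add: psi_calculus_def nomset_def)

lemma comp_eqvt: "swA Pc a b (comp Pc X Y) = comp Pc (swA Pc a b X) (swA Pc a b Y)"
  using psi by (simp add: psi_calculus_def)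
lemma unit_eqvt[simp]: "swA Pc a b (unitA Pc) = unitA Pc"
  using psi by (simp add: psi_calculus_def)
lemma chaneq_eqvt: "swC Pc a b (chaneq Pc M N) = chaneq Pc (swT Pc a b M) (swT Pc a b N)"
  using psi by (simp add: psi_calculus_def)
lemma ent_eqvt: "ent Pc X \<phi> = ent Pc (swA Pc a b X) (swC Pc a b \<phi>)"
  using psi by (simp add: psi_calculus_def)
lemma substT_ok: "subst_ok Pc (swT Pc) (substT Pc)" using psi by (simp add: psi_calculus_def)
lemma substC_ok: "subst_ok Pc (swC Pc) (substC Pc)" using psi by (simp add: psi_calculus_def)
lemma substA_ok: "subst_ok Pc (swA Pc) (substA Pc)" using psi by (simp add: psi_calculus_def)

lemma aeq_refl[simp]: "aeq Pc X X" by (simp add: aeq_def)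
lemma aeq_sym: "aeq Pc X Y \<Longrightarrow> aeq Pc Y X" by (simp add: aeq_def)
lemma aeq_trans: "aeq Pc X Y \<Longrightarrow> aeq Pc Y Z \<Longrightarrow> aeq Pc X Z" by (simp add: aeq_def)
lemma aeq_compl: "aeq Pc X Y \<Longrightarrow> aeq Pc (comp Pc X Z) (comp Pc Y Z)"
  using psi by (simp add: psi_calculus_def)
lemma aeq_unit: "aeq Pc (comp Pc X (unitA Pc)) X"
  using psi by (simp add: psi_calculus_def)
lemma aeq_assoc: "aeq Pc (comp Pc (comp Pc X Y) Z) (comp Pc X (comp Pc Y Z))"
  using psi by (simp add: psi_calculus_def)
lemma aeq_comm: "aeq Pc (comp Pc X Y) (comp Pc Y X)"
  using psi by (simp add: psi_calculus_def)
lemma aeq_compr: "aeq Pc X Y \<Longrightarrow> aeq Pc (comp Pc Z X) (comp Pc Z Y)"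
  by (meson aeq_comm aeq_compl aeq_trans)
lemma aeq_unitl: "aeq Pc (comp Pc (unitA Pc) X) X"
  by (meson aeq_comm aeq_trans aeq_unit)

lemma aeq_swap: assumes "aeq Pc X Y" shows "aeq Pc (swA Pc a b X) (swA Pc a b Y)"
  unfolding aeq_def
proof
  fix \<phi>
  have "ent Pc (swA Pc a b X) \<phi> = ent Pc X (swC Pc a b \<phi>)"
    using ent_eqvt[of X "swC Pc a b \<phi>" a b] by simp
  also have "\<dots> = ent Pc Y (swC Pc a b \<phi>)" using assms by (simp add: aeq_def)
  also have "\<dots> = ent Pc (swA Pc a b Y) \<phi>"
    using ent_eqvt[of Y "swC Pc a b \<phi>" a b] by simp
  finally show "ent Pc (swA Pc a b X) \<phi> = ent Pc (swA Pc a b Y) \<phi>" .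
qed

lemma supp_unit[simp]: "supp (swA Pc) (unitA Pc) = {}"
  using A.supp_le[of "{}" "unitA Pc"] by simp

lemma supp_comp: "supp (swA Pc) (comp Pc X Y) \<subseteq> supp (swA Pc) X \<union> supp (swA Pc) Y"
  by (rule A.supp_le) (auto simp: comp_eqvt A.fresh_swap)

lemma supp_chaneq: "supp (swC Pc) (chaneq Pc M N) \<subseteq> supp (swT Pc) M \<union> supp (swT Pc) N"
  by (rule C.supp_le) (auto simp: chaneq_eqvt T.fresh_swap)

section \<open>Agents\<close>

lemma swap_agent_invol[simp]: "swap_agent Pc a b (swap_agent Pc a b P) = P"
proof (induct P)
  case (PCase cs)
  then show ?case
  proof -
    have "\<forall>p\<in>set cs. (\<lambda>(x, y). (swC Pc a b x, swap_agent Pc a b y)) ((\<lambda>(x, y). (swC Pc a b x, swap_agent Pc a b y)) p) = p"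
      using PCase by (force simp: prod_set_simps)
    then show ?thesis by (simp add: map_prod_def comp_def map_idI)
  qed
qed (simp_all add: comp_def map_idI)

lemma fn_PCase: "fn Pc (PCase cs) = (\<Union>p\<in>set cs. supp (swC Pc) (fst p) \<union> fn Pc (snd p))"
  by (auto simp: map_prod_def case_prod_beta)

lemma fn_swap: "fn Pc (swap_agent Pc a b P) = nswap a b ` fn Pc P"
proof (induct P)
  case (PCase cs)
  then show ?case
    by (auto simp: fn_PCase C.supp_swap image_Un image_UN simp del: fn.simps)
next
  case (PIn M xs N P)
  then show ?case by (simp add: T.supp_swap set_eq_iff nswap_in_image)
next
  case (PRes x P)
  then show ?case by (auto simp: image_set_diff[OF nswap_inj])
qed (auto simp: T.supp_swap A.supp_swap image_Un)

lemma finite_fn[simp]: "finite (fn Pc P)"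
proof (induct P)
  case (PCase cs) then show ?case by (auto simp: fn_PCase simp del: fn.simps)
qed auto

lemma guarded_swap[simp]: "guarded (swap_agent Pc a b P) = guarded P"
  by (induct P) auto

lemma wf_swap[simp]: "wf_agent Pc (swap_agent Pc a b P) = wf_agent Pc P"
proof (induct P)
  case (PIn M xs N P)
  have "distinct (map (nswap a b) xs) = distinct xs" by (simp add: distinct_map nswap_inj inj_on_def)
  moreover have "(set (map (nswap a b) xs) \<subseteq> supp (swT Pc) (swT Pc a b N)) = (set xs \<subseteq> supp (swT Pc) N)"
    by (auto simp: T.supp_swap_iff)
  ultimately show ?case using PIn by simp
qed auto

end



context psi_loc begin

lemma fn_PCase_nth: "fn Pc (PCase cs) = (\<Union>i<length cs. supp (swC Pc) (fst (cs!i)) \<union> fn Pc (snd (cs!i)))"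
  unfolding fn_PCase by (auto simp: set_conv_nth)

lemma alpha_fn: "alpha Pc P Q \<Longrightarrow> fn Pc P = fn Pc Q"
proof (induct rule: alpha.induct)
  case (a_swap a P b)
  then show ?case by (simp add: fn_swap nswap_image_fix)
next
  case (a_case cs ds)
  then show ?case unfolding fn_PCase_nth by auto
qed auto

lemma alpha_wf: "alpha Pc P Q \<Longrightarrow> (wf_agent Pc P = wf_agent Pc Q) \<and> (guarded P = guarded Q)"
proof (induct rule: alpha.induct)
  case (a_case cs ds)
  have "(\<forall>p\<in>set cs. wf_agent Pc (snd p)) = (\<forall>p\<in>set ds. wf_agent Pc (snd p))"
    using a_case by (auto simp: all_set_conv_all_nth)
  moreover have "(\<forall>p\<in>set cs. guarded (snd p)) = (\<forall>p\<in>set ds. guarded (snd p))"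
    using a_case by (auto simp: all_set_conv_all_nth)
  ultimately show ?case by (simp add: map_prod_def case_prod_beta)
qed auto

lemma resid_in: "resid_alpha Pc r s \<Longrightarrow>
   (\<forall>M N. fst r = AIn M N \<longrightarrow> fst s = AIn M N \<and> alpha Pc (snd r) (snd s)) \<and>
   (\<forall>M N. fst s = AIn M N \<longrightarrow> fst r = AIn M N \<and> alpha Pc (snd r) (snd s))"
proof (induct rule: resid_alpha.induct)
  case (ra_agent P Q \<alpha>)
  then show ?case by simp
next
  case (ra_sym r s)
  then show ?case by (meson alpha.a_sym)
next
  case (ra_trans r s t)
  then show ?case by (meson alpha.a_trans)
next
  case (ra_swap a r b)
  obtain \<alpha> P where r: "r = (\<alpha>, P)" by fastforce
  show ?case
  proof (cases \<alpha>)
    case (AIn M N)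
    with ra_swap r have "a \<notin> supp (swT Pc) M" "b \<notin> supp (swT Pc) M"
      "a \<notin> supp (swT Pc) N" "b \<notin> supp (swT Pc) N" "a \<notin> fn Pc P" "b \<notin> fn Pc P"
      by (auto simp: fn_res_def)
    then show ?thesis using r AIn
      by (simp add: swap_res_def T.fresh_swap alpha.a_swap)
  next
    case (AOut M xs N)
    then show ?thesis using r by (simp add: swap_res_def)
  next
    case ATau
    then show ?thesis using r by (simp add: swap_res_def)
  qed
qed

lemma fn_frame_swap: "fn_frame Pc (swap_frame Pc a b F) = nswap a b ` fn_frame Pc F"
  by (simp add: fn_frame_def swap_frame_def A.supp_swap image_set_diff[OF nswap_inj])

lemma fn_frame_swap_fresh: "a \<notin> fn_frame Pc F \<Longrightarrow> b \<notin> fn_frame Pc F \<Longrightarrow>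
  fn_frame Pc (swap_frame Pc a b F) = fn_frame Pc F"
  by (simp add: fn_frame_swap nswap_image_fix)

lemma frame_alpha_fn: "frame_alpha Pc F G \<Longrightarrow> fn_frame Pc F = fn_frame Pc G"
  by (induct rule: frame_alpha.induct) (auto simp: fn_frame_swap_fresh)

lemma swap_frame_invol[simp]: "swap_frame Pc a b (swap_frame Pc a b F) = F"
  by (cases F) (simp add: swap_frame_def map_idI)

lemma swap_frame_comp: "swap_frame Pc a b (swap_frame Pc c d F) =
  swap_frame Pc (nswap a b c) (nswap a b d) (swap_frame Pc a b F)"
  by (simp add: swap_frame_def A.sw_comp[of a b c d] comp_def nswap_comp[of a b c d])

lemma frame_alpha_eqvt: "frame_alpha Pc F G \<Longrightarrow>
   frame_alpha Pc (swap_frame Pc a b F) (swap_frame Pc a b G)"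
proof (induct rule: frame_alpha.induct)
  case (fa_swap c F d)
  then show ?case
    by (simp add: swap_frame_comp[of a b c d] frame_alpha.fa_swap fn_frame_swap nswap_in_image)
qed (auto intro: frame_alpha.intros)

lemma frame_of_supp: "frame_of Pc P F \<Longrightarrow> fn_frame Pc F \<subseteq> fn Pc P"
proof (induct rule: frame_of.induct)
  case (f_par P b1 \<Psi>1 Q b2 \<Psi>2)
  then show ?case using supp_comp[of \<Psi>1 \<Psi>2] by (auto simp: fn_frame_def)
next
  case (f_alpha P F G)
  then show ?case by (simp add: frame_alpha_fn)
next
  case (f_alpha_agent P Q F)
  then show ?case by (simp add: alpha_fn)
qed (auto simp: fn_frame_def)

lemma frame_of_supp': "frame_of Pc P (bs, \<Psi>) \<Longrightarrow> supp (swA Pc) \<Psi> \<subseteq> fn Pc P \<union> set bs"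
  using frame_of_supp[of P "(bs, \<Psi>)"] by (auto simp: fn_frame_def)

end



definition names :: "(name \<times> name) list \<Rightarrow> name set" where
  "names q = fst ` set q \<union> snd ` set q"

definition actA :: "('t, 'c, 'a, 'z) psi_scheme \<Rightarrow> (name \<times> name) list \<Rightarrow> 'a \<Rightarrow> 'a" where
  "actA Pc q X = foldr (\<lambda>p Y. swA Pc (fst p) (snd p) Y) q X"

definition actF :: "('t, 'c, 'a, 'z) psi_scheme \<Rightarrow> (name \<times> name) list \<Rightarrow> 'a frame \<Rightarrow> 'a frame" where
  "actF Pc q F = foldr (\<lambda>p G. swap_frame Pc (fst p) (snd p) G) q F"

definition rn :: "name \<Rightarrow> name \<Rightarrow> (name \<times> name) list \<Rightarrow> (name \<times> name) list" where
  "rn a c q = map (\<lambda>p. (nswap a c (fst p), nswap a c (snd p))) q"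

lemma names_Nil[simp]: "names [] = {}" by (simp add: names_def)
lemma names_Cons[simp]: "names (p # q) = {fst p, snd p} \<union> names q" by (auto simp: names_def)
lemma names_append[simp]: "names (q1 @ q2) = names q1 \<union> names q2" by (auto simp: names_def)
lemma names_rev[simp]: "names (rev q) = names q" by (auto simp: names_def)
lemma finite_names[simp]: "finite (names q)" by (simp add: names_def)
lemma names_rn: "names (rn a c q) = nswap a c ` names q"
  by (induct q) (auto simp: rn_def)

lemma actA_Nil[simp]: "actA Pc [] X = X" by (simp add: actA_def)
lemma actA_Cons[simp]: "actA Pc (p # q) X = swA Pc (fst p) (snd p) (actA Pc q X)" by (simp add: actA_def)
lemma actA_append: "actA Pc (q1 @ q2) X = actA Pc q1 (actA Pc q2 X)" by (simp add: actA_def)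
lemma actF_Nil[simp]: "actF Pc [] F = F" by (simp add: actF_def)
lemma actF_Cons[simp]: "actF Pc (p # q) F = swap_frame Pc (fst p) (snd p) (actF Pc q F)" by (simp add: actF_def)
lemma snd_actF: "snd (actF Pc q F) = actA Pc q (snd F)"
  by (induct q) (auto simp: swap_frame_def)

context psi_loc begin

lemma actA_fresh: "names q \<inter> supp (swA Pc) X = {} \<Longrightarrow> actA Pc q X = X"
  by (induct q) (auto simp: A.fresh_swap)

lemma actA_comp: "actA Pc q (comp Pc X Y) = comp Pc (actA Pc q X) (actA Pc q Y)"
  by (induct q) (auto simp: comp_eqvt)

lemma aeq_actA: "aeq Pc X Y \<Longrightarrow> aeq Pc (actA Pc q X) (actA Pc q Y)"
  by (induct q) (auto simp: aeq_swap)

lemma actA_rev: "actA Pc (rev q) (actA Pc q X) = X"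
  by (induct q arbitrary: X) (auto simp: actA_append)

lemma supp_actA_out: "names q \<inter> U = {} \<Longrightarrow> supp (swA Pc) (actA Pc q X) \<inter> U = supp (swA Pc) X \<inter> U"
proof (induct q)
  case (Cons p q)
  have h: "x \<in> U \<Longrightarrow> nswap (fst p) (snd p) x = x" for x using Cons.prems by (metis IntI empty_iff insertI1 insert_commute names_Cons nswap_simps(3) Un_iff)
  show ?case
  proof (intro set_eqI iffI)
    fix x assume "x \<in> supp (swA Pc) (actA Pc (p # q) X) \<inter> U"
    then show "x \<in> supp (swA Pc) X \<inter> U" using Cons h by (auto simp: A.supp_swap_iff)
  next
    fix x assume "x \<in> supp (swA Pc) X \<inter> U"
    then show "x \<in> supp (swA Pc) (actA Pc (p # q) X) \<inter> U" using Cons h by (auto simp: A.supp_swap_iff)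
  qed
qed simp

lemma actA_rn: "swA Pc a c (actA Pc q X) = actA Pc (rn a c q) (swA Pc a c X)"
  by (induct q) (auto simp: rn_def A.sw_comp[of a c])

lemma K_lemma:
  assumes "finite S" "finite Av"
    and "\<forall>a\<in>names q \<inter> S. a \<notin> supp (swA Pc) X \<and> a \<notin> supp (swA Pc) (actA Pc q X)"
  shows "\<exists>q'. actA Pc q' X = actA Pc q X \<and> names q' \<inter> S = {} \<and> names q' \<inter> Av \<subseteq> names q"
  using assms(3)
proof (induct "card (names q \<inter> S)" arbitrary: q rule: less_induct)
  case less
  show ?case
  proof (cases "names q \<inter> S = {}")
    case True then show ?thesis by blast
  next
    case False
    then obtain a where a: "a \<in> names q \<inter> S" by blast
    have "finite (S \<union> Av \<union> names q \<union> supp (swA Pc) X \<union> supp (swA Pc) (actA Pc q X))"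
      using assms by simp
    then obtain c where c: "c \<notin> S \<union> Av \<union> names q \<union> supp (swA Pc) X \<union> supp (swA Pc) (actA Pc q X)"
      by (metis ex_new_if_finite infinite_UNIV_nat)
    have ac: "a \<noteq> c" using a c by auto
    have fa: "a \<notin> supp (swA Pc) X" "a \<notin> supp (swA Pc) (actA Pc q X)" using less.prems a by auto
    define q1 where "q1 = rn a c q"
    have eq: "actA Pc q1 X = actA Pc q X"
    proof -
      have "swA Pc a c (actA Pc q X) = actA Pc q1 (swA Pc a c X)" by (simp add: actA_rn q1_def)
      also have "swA Pc a c X = X" using fa c by (simp add: A.fresh_swap)
      finally have "actA Pc q1 X = swA Pc a c (actA Pc q X)" by simp
      also have "\<dots> = actA Pc q X" using fa c by (simp add: A.fresh_swap)
      finally show ?thesis .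
    qed
    have nq1: "names q1 = (names q - {a}) \<union> {c}"
    proof -
      have "names q1 = nswap a c ` names q" by (simp add: q1_def names_rn)
      also have "\<dots> = (names q - {a}) \<union> {c}"
        using a c by (auto simp: nswap_in_image nswap_def split: if_splits)
      finally show ?thesis .
    qed
    have lt: "card (names q1 \<inter> S) < card (names q \<inter> S)"
    proof -
      have e: "names q1 \<inter> S = (names q \<inter> S) - {a}" using nq1 c by auto
      show ?thesis unfolding e by (rule card_Diff1_less) (use a assms in auto)
    qed
    have "\<forall>b\<in>names q1 \<inter> S. b \<notin> supp (swA Pc) X \<and> b \<notin> supp (swA Pc) (actA Pc q1 X)"
      using less.prems nq1 c eq by auto
    from less.hyps[OF lt this] obtain q' where
      q': "actA Pc q' X = actA Pc q1 X" "names q' \<inter> S = {}" "names q' \<inter> Av \<subseteq> names q1" by blast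
    have "names q' \<inter> Av \<subseteq> names q" using q'(3) nq1 c by auto
    then show ?thesis using q' eq by auto
  qed
qed

section \<open>Frame equivalence\<close>

definition FE :: "'a frame \<Rightarrow> 'a frame \<Rightarrow> bool" where
  "FE F G \<longleftrightarrow> fn_frame Pc F = fn_frame Pc G \<and>
     (\<exists>q. snd G = actA Pc q (snd F) \<and> names q \<inter> fn_frame Pc F = {})"

lemma FE_refl[simp]: "FE F F"
  unfolding FE_def by (rule conjI, simp, rule exI[of _ "[]"], simp)

lemma FE_sym: "FE F G \<Longrightarrow> FE G F"
  unfolding FE_def by (metis actA_rev names_rev)

lemma FE_trans: "FE F G \<Longrightarrow> FE G H \<Longrightarrow> FE F H"
  unfolding FE_def by (metis (no_types, lifting) actA_append names_append Int_Un_distrib2 sup_eq_bot_iff)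

lemma frame_alpha_FE: "frame_alpha Pc F G \<Longrightarrow> FE F G"
proof (induct rule: frame_alpha.induct)
  case (fa_swap a F b)
  show ?case unfolding FE_def
    apply (rule conjI)
     apply (simp add: fn_frame_swap_fresh fa_swap)
    apply (rule exI[of _ "[(a, b)]"])
    using fa_swap by (simp add: swap_frame_def)
qed (auto intro: FE_sym FE_trans)

lemma Ren: assumes "finite D" shows "\<exists>F'. frame_alpha Pc F F' \<and> set (fst F') \<inter> D = {}"
proof (induct "card (set (fst F) \<inter> D)" arbitrary: F rule: less_induct)
  case less
  show ?case
  proof (cases "set (fst F) \<inter> D = {}")
    case True then show ?thesis by (blast intro: frame_alpha.fa_refl)
  next
    case False
    then obtain b where b: "b \<in> set (fst F) \<inter> D" by blast
    have "finite (D \<union> set (fst F) \<union> supp (swA Pc) (snd F))" using assms by simp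
    then obtain c where c: "c \<notin> D \<union> set (fst F) \<union> supp (swA Pc) (snd F)"
      by (metis ex_new_if_finite infinite_UNIV_nat)
    define F1 where "F1 = swap_frame Pc b c F"
    have fa: "frame_alpha Pc F F1"
      unfolding F1_def by (rule frame_alpha.fa_swap) (use b c in \<open>auto simp: fn_frame_def\<close>)
    have s1: "set (fst F1) = (set (fst F) - {b}) \<union> {c}"
      using b c by (auto simp: F1_def swap_frame_def nswap_def split: if_splits)
    have e: "set (fst F1) \<inter> D = (set (fst F) \<inter> D) - {b}" using s1 c by auto
    have lt: "card (set (fst F1) \<inter> D) < card (set (fst F) \<inter> D)"
      unfolding e by (rule card_Diff1_less) (use b assms in auto)
    from less.hyps[OF lt] obtain F' where "frame_alpha Pc F1 F'" "set (fst F') \<inter> D = {}" by blast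
    then show ?thesis using fa by (blast intro: frame_alpha.fa_trans)
  qed
qed

lemma actF_frame_alpha: "names q \<inter> fn_frame Pc F = {} \<Longrightarrow>
  frame_alpha Pc F (actF Pc q F) \<and> fn_frame Pc (actF Pc q F) = fn_frame Pc F"
proof (induct q)
  case (Cons p q)
  then have ih: "frame_alpha Pc F (actF Pc q F)" "fn_frame Pc (actF Pc q F) = fn_frame Pc F"
    and p: "fst p \<notin> fn_frame Pc F" "snd p \<notin> fn_frame Pc F" by auto
  have "frame_alpha Pc (actF Pc q F) (swap_frame Pc (fst p) (snd p) (actF Pc q F))"
    by (rule frame_alpha.fa_swap) (use ih p in auto)
  then show ?case using ih p by (auto simp: fn_frame_swap_fresh intro: frame_alpha.fa_trans)
qed (simp add: frame_alpha.fa_refl)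

lemma actF_fst: "set (fst F) \<inter> S = {} \<Longrightarrow> names q \<inter> S = {} \<Longrightarrow> set (fst (actF Pc q F)) \<inter> S = {}"
proof (induct q)
  case (Cons p q)
  then show ?case by (auto simp: swap_frame_def nswap_def split: if_splits)
qed simp

end



inductive frame1 :: "('t, 'c, 'a, 'z) psi_scheme \<Rightarrow> ('t, 'c, 'a) agent \<Rightarrow> 'a frame \<Rightarrow> bool"
  for Pc where
  g_nil: "frame1 Pc PNil ([], unitA Pc)"
| g_out: "frame1 Pc (POut M N P) ([], unitA Pc)"
| g_in: "frame1 Pc (PIn M xs N P) ([], unitA Pc)"
| g_case: "frame1 Pc (PCase cs) ([], unitA Pc)"
| g_bang: "frame1 Pc (PBang P) ([], unitA Pc)"
| g_assert: "frame1 Pc (PAssert \<Psi>) ([], \<Psi>)"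
| g_res: "frame1 Pc P (bs, \<Psi>) \<Longrightarrow> frame1 Pc (PRes x P) (x # bs, \<Psi>)"
| g_par: "frame1 Pc P (b1, \<Psi>1) \<Longrightarrow> frame1 Pc Q (b2, \<Psi>2) \<Longrightarrow>
     set b1 \<inter> (set b2 \<union> supp (swA Pc) \<Psi>2) = {} \<Longrightarrow>
     set b2 \<inter> (set b1 \<union> supp (swA Pc) \<Psi>1) = {} \<Longrightarrow>
     frame1 Pc (PPar P Q) (b1 @ b2, comp Pc \<Psi>1 \<Psi>2)"
| g_alpha: "frame1 Pc P F \<Longrightarrow> frame_alpha Pc F G \<Longrightarrow> frame1 Pc P G"

definition unitish :: "('t, 'c, 'a) agent \<Rightarrow> bool" where
  "unitish X = (case X of PRes _ _ \<Rightarrow> False | PPar _ _ \<Rightarrow> False | PAssert _ \<Rightarrow> False | _ \<Rightarrow> True)"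

lemma unitish_simps[simp]: "unitish PNil" "unitish (POut M N P)" "unitish (PIn M xs N P)"
  "unitish (PCase cs)" "unitish (PBang P)" "\<not> unitish (PRes x P)" "\<not> unitish (PPar P Q)"
  "\<not> unitish (PAssert \<Psi>)"
  by (simp_all add: unitish_def)

context psi_loc begin

lemma frame1_frame_of: "frame1 Pc P F \<Longrightarrow> frame_of Pc P F"
  by (induct rule: frame1.induct) (auto intro: frame_of.intros)

lemma frame1_supp: "frame1 Pc P F \<Longrightarrow> fn_frame Pc F \<subseteq> fn Pc P"
  by (rule frame_of_supp[OF frame1_frame_of])

lemma frame1_supp': "frame1 Pc P (bs, \<Psi>) \<Longrightarrow> supp (swA Pc) \<Psi> \<subseteq> fn Pc P \<union> set bs"
  by (rule frame_of_supp'[OF frame1_frame_of])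

lemma frame1_eqvt: "frame1 Pc P F \<Longrightarrow> frame1 Pc (swap_agent Pc a b P) (swap_frame Pc a b F)"
proof (induct rule: frame1.induct)
  case (g_res P bs \<Psi> x)
  then show ?case by (simp add: swap_frame_def frame1.g_res)
next
  case (g_par P b1 \<Psi>1 Q b2 \<Psi>2)
  have d1: "set (map (nswap a b) b1) \<inter> (set (map (nswap a b) b2) \<union> supp (swA Pc) (swA Pc a b \<Psi>2)) = {}"
    using g_par(5) by (auto simp: A.supp_swap_iff)
  have d2: "set (map (nswap a b) b2) \<inter> (set (map (nswap a b) b1) \<union> supp (swA Pc) (swA Pc a b \<Psi>1)) = {}"
    using g_par(6) by (auto simp: A.supp_swap_iff)
  show ?case using frame1.g_par[OF g_par(2)[unfolded swap_frame_def, simplified]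
        g_par(4)[unfolded swap_frame_def, simplified] d1 d2]
    by (simp add: swap_frame_def comp_eqvt)
next
  case (g_alpha P F G)
  then show ?case by (blast intro: frame1.g_alpha frame_alpha_eqvt)
qed (auto simp: swap_frame_def intro: frame1.intros)

lemma FE_res: "FE (bs, \<Psi>) (bs', \<Psi>') \<Longrightarrow> FE (x # bs, \<Psi>) (x # bs', \<Psi>')"
  unfolding FE_def fn_frame_def by auto

lemma fnf_par: assumes "set b2 \<inter> supp (swA Pc) \<Psi>1 = {}" "set b1 \<inter> supp (swA Pc) \<Psi>2 = {}"
  shows "fn_frame Pc (b1 @ b2, comp Pc \<Psi>1 \<Psi>2) =
    supp (swA Pc) (comp Pc \<Psi>1 \<Psi>2) \<inter> (fn_frame Pc (b1, \<Psi>1) \<union> fn_frame Pc (b2, \<Psi>2))"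
  using assms supp_comp[of \<Psi>1 \<Psi>2] by (auto simp: fn_frame_def)

lemma FE_par:
  assumes fe1: "FE (b1, \<Psi>1) (b1', \<Psi>1')" and fe2: "FE (b2, \<Psi>2) (b2', \<Psi>2')"
    and d1: "set b1 \<inter> (set b2 \<union> supp (swA Pc) \<Psi>2) = {}" "set b2 \<inter> (set b1 \<union> supp (swA Pc) \<Psi>1) = {}"
    and d2: "set b1' \<inter> (set b2' \<union> supp (swA Pc) \<Psi>2') = {}" "set b2' \<inter> (set b1' \<union> supp (swA Pc) \<Psi>1') = {}"
  shows "FE (b1 @ b2, comp Pc \<Psi>1 \<Psi>2) (b1' @ b2', comp Pc \<Psi>1' \<Psi>2')"
proof -
  define U1 where "U1 = fn_frame Pc (b1, \<Psi>1)"
  define U2 where "U2 = fn_frame Pc (b2, \<Psi>2)"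
  have U1': "U1 = fn_frame Pc (b1', \<Psi>1')" using fe1 by (simp add: FE_def U1_def)
  have U2': "U2 = fn_frame Pc (b2', \<Psi>2')" using fe2 by (simp add: FE_def U2_def)
  have fin: "finite U1" "finite U2" by (simp_all add: U1_def U2_def fn_frame_def)
  have s1: "supp (swA Pc) \<Psi>1 \<subseteq> U1 \<union> set b1" "U1 \<subseteq> supp (swA Pc) \<Psi>1" "U1 \<inter> set b1 = {}"
    by (auto simp: U1_def fn_frame_def)
  have s1': "supp (swA Pc) \<Psi>1' \<subseteq> U1 \<union> set b1'" "U1 \<subseteq> supp (swA Pc) \<Psi>1'" "U1 \<inter> set b1' = {}"
    by (auto simp: U1' fn_frame_def)
  have s2: "supp (swA Pc) \<Psi>2 \<subseteq> U2 \<union> set b2" "U2 \<subseteq> supp (swA Pc) \<Psi>2" "U2 \<inter> set b2 = {}"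
    by (auto simp: U2_def fn_frame_def)
  have s2': "supp (swA Pc) \<Psi>2' \<subseteq> U2 \<union> set b2'" "U2 \<subseteq> supp (swA Pc) \<Psi>2'" "U2 \<inter> set b2' = {}"
    by (auto simp: U2' fn_frame_def)
  obtain q1 where q1: "\<Psi>1' = actA Pc q1 \<Psi>1" "names q1 \<inter> U1 = {}"
    using fe1 by (auto simp: FE_def U1_def)
  define D where "D = set b1 \<union> set b1' \<union> supp (swA Pc) \<Psi>1 \<union> supp (swA Pc) \<Psi>1'"
  have "finite D" by (simp add: D_def)
  from Ren[OF this, of "(b2, \<Psi>2)"] obtain F2 where
    F2: "frame_alpha Pc (b2, \<Psi>2) F2" "set (fst F2) \<inter> D = {}" by blast
  obtain b2'' \<Psi>2'' where F2e: "F2 = (b2'', \<Psi>2'')" by fastforce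
  have fe2'': "FE (b2, \<Psi>2) (b2'', \<Psi>2'')" using frame_alpha_FE[OF F2(1)] F2e by simp
  have U2'': "U2 = fn_frame Pc (b2'', \<Psi>2'')" using fe2'' by (simp add: FE_def U2_def)
  have s2'': "supp (swA Pc) \<Psi>2'' \<subseteq> U2 \<union> set b2''" by (auto simp: U2'' fn_frame_def)
  have b2D: "set b2'' \<inter> D = {}" using F2(2) F2e by simp
  obtain r where r: "\<Psi>2'' = actA Pc r \<Psi>2" "names r \<inter> U2 = {}"
    using fe2'' by (auto simp: FE_def U2_def)
  have "\<exists>r'. actA Pc r' \<Psi>2 = actA Pc r \<Psi>2 \<and> names r' \<inter> (supp (swA Pc) \<Psi>1 \<union> U1 \<union> U2) = {}
          \<and> names r' \<inter> {} \<subseteq> names r"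
  proof (rule K_lemma)
    show "\<forall>a\<in>names r \<inter> (supp (swA Pc) \<Psi>1 \<union> U1 \<union> U2).
        a \<notin> supp (swA Pc) \<Psi>2 \<and> a \<notin> supp (swA Pc) (actA Pc r \<Psi>2)"
    proof (intro ballI conjI)
      fix a assume a: "a \<in> names r \<inter> (supp (swA Pc) \<Psi>1 \<union> U1 \<union> U2)"
      then have aU2: "a \<notin> U2" using r(2) by auto
      have aS1: "a \<in> supp (swA Pc) \<Psi>1" using a s1(2) aU2 by auto
      show "a \<notin> supp (swA Pc) \<Psi>2"
      proof
        assume "a \<in> supp (swA Pc) \<Psi>2"
        then have "a \<in> set b2" using s2(1) aU2 by auto
        then show False using d1(2) aS1 by auto
      qed
      show "a \<notin> supp (swA Pc) (actA Pc r \<Psi>2)"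
      proof
        assume "a \<in> supp (swA Pc) (actA Pc r \<Psi>2)"
        then have "a \<in> set b2''" using s2'' aU2 r(1) by auto
        then show False using b2D aS1 by (auto simp: D_def)
      qed
    qed
  qed (simp_all add: fin)
  then obtain r' where r': "actA Pc r' \<Psi>2 = \<Psi>2''" "names r' \<inter> (supp (swA Pc) \<Psi>1 \<union> U1 \<union> U2) = {}"
    using r by auto
  have r'1: "actA Pc r' \<Psi>1 = \<Psi>1" using r' by (intro actA_fresh) auto
  have "\<exists>q. actA Pc q \<Psi>1 = actA Pc q1 \<Psi>1 \<and> names q \<inter> (supp (swA Pc) \<Psi>2'' \<union> U1 \<union> U2) = {}
          \<and> names q \<inter> {} \<subseteq> names q1"
  proof (rule K_lemma)
    show "\<forall>a\<in>names q1 \<inter> (supp (swA Pc) \<Psi>2'' \<union> U1 \<union> U2).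
        a \<notin> supp (swA Pc) \<Psi>1 \<and> a \<notin> supp (swA Pc) (actA Pc q1 \<Psi>1)"
    proof (intro ballI conjI)
      fix a assume a: "a \<in> names q1 \<inter> (supp (swA Pc) \<Psi>2'' \<union> U1 \<union> U2)"
      then have aU1: "a \<notin> U1" using q1(2) by auto
      have aS: "a \<in> U2 \<or> a \<in> set b2''" using a aU1 s2'' by auto
      show "a \<notin> supp (swA Pc) \<Psi>1"
      proof
        assume "a \<in> supp (swA Pc) \<Psi>1"
        then have ab1: "a \<in> set b1" using s1(1) aU1 by auto
        show False using aS
        proof
          assume "a \<in> U2" then show False using ab1 s2(2) d1(1) by auto
        next
          assume "a \<in> set b2''" then show False using ab1 b2D by (auto simp: D_def)
        qed
      qed
      show "a \<notin> supp (swA Pc) (actA Pc q1 \<Psi>1)"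
      proof
        assume "a \<in> supp (swA Pc) (actA Pc q1 \<Psi>1)"
        then have ab1: "a \<in> set b1'" using s1'(1) aU1 q1(1) by auto
        show False using aS
        proof
          assume "a \<in> U2" then show False using ab1 s2'(2) d2(1) by auto
        next
          assume "a \<in> set b2''" then show False using ab1 b2D by (auto simp: D_def)
        qed
      qed
    qed
  qed (simp_all add: fin)
  then obtain q1' where q1': "actA Pc q1' \<Psi>1 = \<Psi>1'" "names q1' \<inter> (supp (swA Pc) \<Psi>2'' \<union> U1 \<union> U2) = {}"
    using q1 by auto
  have q1'2: "actA Pc q1' \<Psi>2'' = \<Psi>2''" using q1' by (intro actA_fresh) auto
  have "FE (b2'', \<Psi>2'') (b2', \<Psi>2')" using FE_trans[OF FE_sym[OF fe2''] fe2] .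
  then obtain s where s: "\<Psi>2' = actA Pc s \<Psi>2''" "names s \<inter> U2 = {}"
    by (auto simp: FE_def U2'')
  have "\<exists>q. actA Pc q \<Psi>2'' = actA Pc s \<Psi>2'' \<and> names q \<inter> (supp (swA Pc) \<Psi>1' \<union> U1 \<union> U2) = {}
          \<and> names q \<inter> {} \<subseteq> names s"
  proof (rule K_lemma)
    show "\<forall>a\<in>names s \<inter> (supp (swA Pc) \<Psi>1' \<union> U1 \<union> U2).
        a \<notin> supp (swA Pc) \<Psi>2'' \<and> a \<notin> supp (swA Pc) (actA Pc s \<Psi>2'')"
    proof (intro ballI conjI)
      fix a assume a: "a \<in> names s \<inter> (supp (swA Pc) \<Psi>1' \<union> U1 \<union> U2)"
      then have aU2: "a \<notin> U2" using s(2) by auto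
      have aS1: "a \<in> supp (swA Pc) \<Psi>1'" using a s1'(2) aU2 by auto
      show "a \<notin> supp (swA Pc) \<Psi>2''"
      proof
        assume "a \<in> supp (swA Pc) \<Psi>2''"
        then have "a \<in> set b2''" using s2'' aU2 by auto
        then show False using b2D aS1 by (auto simp: D_def)
      qed
      show "a \<notin> supp (swA Pc) (actA Pc s \<Psi>2'')"
      proof
        assume "a \<in> supp (swA Pc) (actA Pc s \<Psi>2'')"
        then have "a \<in> set b2'" using s2'(1) aU2 s(1) by auto
        then show False using d2(2) aS1 by auto
      qed
    qed
  qed (simp_all add: fin)
  then obtain s' where s': "actA Pc s' \<Psi>2'' = \<Psi>2'" "names s' \<inter> (supp (swA Pc) \<Psi>1' \<union> U1 \<union> U2) = {}"
    using s by auto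
  have s'1: "actA Pc s' \<Psi>1' = \<Psi>1'" using s' by (intro actA_fresh) auto
  define qq where "qq = s' @ q1' @ r'"
  have act: "actA Pc qq (comp Pc \<Psi>1 \<Psi>2) = comp Pc \<Psi>1' \<Psi>2'"
    by (simp add: qq_def actA_append actA_comp r'1 r'(1) q1'(1) q1'2 s'1 s'(1))
  have nq: "names qq \<inter> (U1 \<union> U2) = {}" using r' q1' s' by (auto simp: qq_def)
  have fnf1: "fn_frame Pc (b1 @ b2, comp Pc \<Psi>1 \<Psi>2) = supp (swA Pc) (comp Pc \<Psi>1 \<Psi>2) \<inter> (U1 \<union> U2)"
    unfolding U1_def U2_def by (rule fnf_par) (use d1 in auto)
  have fnf2: "fn_frame Pc (b1' @ b2', comp Pc \<Psi>1' \<Psi>2') = supp (swA Pc) (comp Pc \<Psi>1' \<Psi>2') \<inter> (U1 \<union> U2)"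
    unfolding U1' U2' by (rule fnf_par) (use d2 in auto)
  have "supp (swA Pc) (comp Pc \<Psi>1' \<Psi>2') \<inter> (U1 \<union> U2) = supp (swA Pc) (comp Pc \<Psi>1 \<Psi>2) \<inter> (U1 \<union> U2)"
    using supp_actA_out[OF nq, of "comp Pc \<Psi>1 \<Psi>2"] act by simp
  then have e: "fn_frame Pc (b1 @ b2, comp Pc \<Psi>1 \<Psi>2) = fn_frame Pc (b1' @ b2', comp Pc \<Psi>1' \<Psi>2')"
    using fnf1 fnf2 by simp
  show ?thesis unfolding FE_def
  proof (intro conjI exI)
    show "fn_frame Pc (b1 @ b2, comp Pc \<Psi>1 \<Psi>2) = fn_frame Pc (b1' @ b2', comp Pc \<Psi>1' \<Psi>2')" by (rule e)
    show "snd (b1' @ b2', comp Pc \<Psi>1' \<Psi>2') = actA Pc qq (snd (b1 @ b2, comp Pc \<Psi>1 \<Psi>2))"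
      using act by simp
    show "names qq \<inter> fn_frame Pc (b1 @ b2, comp Pc \<Psi>1 \<Psi>2) = {}" using nq fnf1 by auto
  qed
qed

end



context psi_loc begin

lemma inv_unit: "frame1 Pc X G \<Longrightarrow> unitish X \<Longrightarrow> FE ([], unitA Pc) G"
  by (induct rule: frame1.induct) (auto intro: FE_trans frame_alpha_FE)

lemma inv_assert: "frame1 Pc X G \<Longrightarrow> X = PAssert \<Psi> \<Longrightarrow> FE ([], \<Psi>) G"
  by (induct rule: frame1.induct) (auto intro: FE_trans frame_alpha_FE)

lemma inv_res: "frame1 Pc X G \<Longrightarrow> X = PRes x P \<Longrightarrow> \<exists>bs \<Psi>. frame1 Pc P (bs, \<Psi>) \<and> FE (x # bs, \<Psi>) G"
proof (induct rule: frame1.induct)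
  case (g_res P bs \<Psi> y)
  then show ?case using FE_refl by blast
next
  case (g_alpha P F G)
  then show ?case by (blast intro: FE_trans frame_alpha_FE)
qed auto

lemma inv_par: "frame1 Pc X G \<Longrightarrow> X = PPar P Q \<Longrightarrow> \<exists>b1 \<Psi>1 b2 \<Psi>2. frame1 Pc P (b1, \<Psi>1) \<and> frame1 Pc Q (b2, \<Psi>2) \<and>
     set b1 \<inter> (set b2 \<union> supp (swA Pc) \<Psi>2) = {} \<and> set b2 \<inter> (set b1 \<union> supp (swA Pc) \<Psi>1) = {} \<and>
     FE (b1 @ b2, comp Pc \<Psi>1 \<Psi>2) G"
proof (induct rule: frame1.induct)
  case (g_par P' b1 \<Psi>1 Q' b2 \<Psi>2)
  then have "P' = P" "Q' = Q" by auto
  then show ?case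
    by (intro exI[of _ b1] exI[of _ \<Psi>1] exI[of _ b2] exI[of _ \<Psi>2]) (use g_par in simp)
next
  case (g_alpha P F G)
  then show ?case by (blast intro: FE_trans frame_alpha_FE)
qed auto

lemma UQ1: "frame1 Pc P F \<Longrightarrow> frame1 Pc P G \<Longrightarrow> FE F G"
proof (induct P arbitrary: F G)
  case (PAssert \<Psi>)
  then show ?case using inv_assert by (blast intro: FE_trans FE_sym)
next
  case (PRes x P)
  obtain bs \<Psi> where 1: "frame1 Pc P (bs, \<Psi>)" "FE (x # bs, \<Psi>) F" using inv_res[OF PRes(2)] by blast
  obtain bs' \<Psi>' where 2: "frame1 Pc P (bs', \<Psi>')" "FE (x # bs', \<Psi>') G" using inv_res[OF PRes(3)] by blast
  have "FE (x # bs, \<Psi>) (x # bs', \<Psi>')" using PRes(1)[OF 1(1) 2(1)] by (rule FE_res)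
  then show ?case using 1 2 by (blast intro: FE_trans FE_sym)
next
  case (PPar P Q)
  obtain b1 \<Psi>1 b2 \<Psi>2 where 1: "frame1 Pc P (b1, \<Psi>1)" "frame1 Pc Q (b2, \<Psi>2)"
     "set b1 \<inter> (set b2 \<union> supp (swA Pc) \<Psi>2) = {}" "set b2 \<inter> (set b1 \<union> supp (swA Pc) \<Psi>1) = {}"
     "FE (b1 @ b2, comp Pc \<Psi>1 \<Psi>2) F" using inv_par[OF PPar(3)] by blast
  obtain b1' \<Psi>1' b2' \<Psi>2' where 2: "frame1 Pc P (b1', \<Psi>1')" "frame1 Pc Q (b2', \<Psi>2')"
     "set b1' \<inter> (set b2' \<union> supp (swA Pc) \<Psi>2') = {}" "set b2' \<inter> (set b1' \<union> supp (swA Pc) \<Psi>1') = {}"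
     "FE (b1' @ b2', comp Pc \<Psi>1' \<Psi>2') G" using inv_par[OF PPar(4)] by blast
  have "FE (b1 @ b2, comp Pc \<Psi>1 \<Psi>2) (b1' @ b2', comp Pc \<Psi>1' \<Psi>2')"
    by (rule FE_par[OF PPar(1)[OF 1(1) 2(1)] PPar(2)[OF 1(2) 2(2)] 1(3,4) 2(3,4)])
  then show ?case using 1 2 by (blast intro: FE_trans FE_sym)
qed (meson inv_unit unitish_simps FE_trans FE_sym)+

lemma frame1_ren: "frame1 Pc P F \<Longrightarrow> finite D \<Longrightarrow> \<exists>F'. frame1 Pc P F' \<and> FE F F' \<and> set (fst F') \<inter> D = {}"
  by (meson Ren frame1.g_alpha frame_alpha_FE)

lemma DISJ: assumes "frame1 Pc P F1" "frame1 Pc Q F2" "finite D"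
  shows "\<exists>b1 \<Psi>1 b2 \<Psi>2. frame1 Pc P (b1, \<Psi>1) \<and> frame1 Pc Q (b2, \<Psi>2) \<and> FE F1 (b1, \<Psi>1) \<and> FE F2 (b2, \<Psi>2) \<and>
     set b1 \<inter> (set b2 \<union> supp (swA Pc) \<Psi>2) = {} \<and> set b2 \<inter> (set b1 \<union> supp (swA Pc) \<Psi>1) = {} \<and>
     set b1 \<inter> D = {} \<and> set b2 \<inter> D = {}"
proof -
  obtain F1' where F1': "frame1 Pc P F1'" "FE F1 F1'" "set (fst F1') \<inter> (D \<union> fn Pc Q) = {}"
    using frame1_ren[OF assms(1), of "D \<union> fn Pc Q"] assms by auto
  obtain b1 \<Psi>1 where e1: "F1' = (b1, \<Psi>1)" by fastforce
  obtain F2' where F2': "frame1 Pc Q F2'" "FE F2 F2'" "set (fst F2') \<inter> (D \<union> set b1 \<union> supp (swA Pc) \<Psi>1) = {}"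
    using frame1_ren[OF assms(2), of "D \<union> set b1 \<union> supp (swA Pc) \<Psi>1"] assms by auto
  obtain b2 \<Psi>2 where e2: "F2' = (b2, \<Psi>2)" by fastforce
  have "supp (swA Pc) \<Psi>2 \<subseteq> fn Pc Q \<union> set b2" using frame1_supp'[of Q b2 \<Psi>2] F2' e2 by simp
  then show ?thesis using F1' F2' e1 e2 by (intro exI[of _ b1] exI[of _ \<Psi>1] exI[of _ b2] exI[of _ \<Psi>2]) auto
qed

lemma frame1_exists: "finite D \<Longrightarrow> \<exists>F. frame1 Pc P F \<and> set (fst F) \<inter> D = {}"
proof (induct P arbitrary: D)
  case (PRes x P)
  obtain F where "frame1 Pc P F" using PRes(1)[of "{}"] by auto
  then have "frame1 Pc (PRes x P) (x # fst F, snd F)" by (metis frame1.g_res prod.collapse)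
  then show ?case using frame1_ren PRes(2) by blast
next
  case (PPar P Q)
  obtain F1 where 1: "frame1 Pc P F1" using PPar(1)[of "{}"] by auto
  obtain F2 where 2: "frame1 Pc Q F2" using PPar(2)[of "{}"] by auto
  from DISJ[OF 1 2 PPar(3)] obtain b1 \<Psi>1 b2 \<Psi>2 where "frame1 Pc P (b1, \<Psi>1)" "frame1 Pc Q (b2, \<Psi>2)"
    "set b1 \<inter> (set b2 \<union> supp (swA Pc) \<Psi>2) = {}" "set b2 \<inter> (set b1 \<union> supp (swA Pc) \<Psi>1) = {}"
    "set b1 \<inter> D = {}" "set b2 \<inter> D = {}" by blast
  then show ?case by (intro exI[of _ "(b1 @ b2, comp Pc \<Psi>1 \<Psi>2)"]) (auto intro: frame1.g_par)
qed (rule exI, rule conjI, rule frame1.intros, simp)+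

lemma frame_exists: "finite D \<Longrightarrow> \<exists>bs \<Psi>. frame_of Pc P (bs, \<Psi>) \<and> set bs \<inter> D = {}"
  by (metis frame1_exists frame1_frame_of prod.collapse)

lemma L_alpha: "alpha Pc P Q \<Longrightarrow>
   (\<forall>F. frame1 Pc Q F \<longrightarrow> (\<exists>F'. frame1 Pc P F' \<and> FE F' F)) \<and>
   (\<forall>F. frame1 Pc P F \<longrightarrow> (\<exists>F'. frame1 Pc Q F' \<and> FE F' F))"
proof (induct rule: alpha.induct)
  case (a_refl P)
  then show ?case by (meson FE_refl)
next
  case (a_sym P Q)
  then show ?case by auto
next
  case (a_trans P Q R)
  then show ?case by (meson FE_trans)
next
  case (a_swap a P b)
  have fs: "fn Pc (swap_agent Pc a b P) = fn Pc P" using a_swap by (simp add: fn_swap nswap_image_fix)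
  show ?case
  proof (intro conjI allI impI)
    fix F assume F: "frame1 Pc (swap_agent Pc a b P) F"
    have "frame1 Pc P (swap_frame Pc a b F)" using frame1_eqvt[OF F, of a b] by simp
    moreover have "frame_alpha Pc F (swap_frame Pc a b F)"
      using frame1_supp[OF F] fs a_swap by (intro frame_alpha.fa_swap) auto
    ultimately show "\<exists>F'. frame1 Pc P F' \<and> FE F' F" by (blast intro: FE_sym frame_alpha_FE)
  next
    fix F assume F: "frame1 Pc P F"
    have "frame1 Pc (swap_agent Pc a b P) (swap_frame Pc a b F)" using frame1_eqvt[OF F, of a b] by simp
    moreover have "frame_alpha Pc F (swap_frame Pc a b F)"
      using frame1_supp[OF F] a_swap by (intro frame_alpha.fa_swap) auto
    ultimately show "\<exists>F'. frame1 Pc (swap_agent Pc a b P) F' \<and> FE F' F" by (blast intro: FE_sym frame_alpha_FE)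
  qed
next
  case (a_res P Q x)
  show ?case
  proof (intro conjI allI impI)
    fix F assume "frame1 Pc (PRes x Q) F"
    then obtain bs \<Psi> where 1: "frame1 Pc Q (bs, \<Psi>)" "FE (x # bs, \<Psi>) F" using inv_res by blast
    then obtain F' where 2: "frame1 Pc P F'" "FE F' (bs, \<Psi>)" using a_res by blast
    have "frame1 Pc (PRes x P) (x # fst F', snd F')" using 2 by (metis frame1.g_res prod.collapse)
    moreover have "FE (x # fst F', snd F') (x # bs, \<Psi>)" using 2 by (metis FE_res prod.collapse)
    ultimately show "\<exists>F'. frame1 Pc (PRes x P) F' \<and> FE F' F" using 1 by (blast intro: FE_trans)
  next
    fix F assume "frame1 Pc (PRes x P) F"
    then obtain bs \<Psi> where 1: "frame1 Pc P (bs, \<Psi>)" "FE (x # bs, \<Psi>) F" using inv_res by blast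
    then obtain F' where 2: "frame1 Pc Q F'" "FE F' (bs, \<Psi>)" using a_res by blast
    have "frame1 Pc (PRes x Q) (x # fst F', snd F')" using 2 by (metis frame1.g_res prod.collapse)
    moreover have "FE (x # fst F', snd F') (x # bs, \<Psi>)" using 2 by (metis FE_res prod.collapse)
    ultimately show "\<exists>F'. frame1 Pc (PRes x Q) F' \<and> FE F' F" using 1 by (blast intro: FE_trans)
  qed
next
  case (a_par P P' Q Q')
  have gen: "\<exists>F'. frame1 Pc (PPar A B) F' \<and> FE F' F"
    if ab: "\<forall>F. frame1 Pc A' F \<longrightarrow> (\<exists>F'. frame1 Pc A F' \<and> FE F' F)"
       "\<forall>F. frame1 Pc B' F \<longrightarrow> (\<exists>F'. frame1 Pc B F' \<and> FE F' F)"
       and F: "frame1 Pc (PPar A' B') F" for A B A' B' F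
  proof -
    obtain b1 \<Psi>1 b2 \<Psi>2 where 1: "frame1 Pc A' (b1, \<Psi>1)" "frame1 Pc B' (b2, \<Psi>2)"
     "set b1 \<inter> (set b2 \<union> supp (swA Pc) \<Psi>2) = {}" "set b2 \<inter> (set b1 \<union> supp (swA Pc) \<Psi>1) = {}"
     "FE (b1 @ b2, comp Pc \<Psi>1 \<Psi>2) F" using inv_par[OF F] by blast
    obtain F1 where F1: "frame1 Pc A F1" "FE F1 (b1, \<Psi>1)" using ab(1) 1(1) by blast
    obtain F2 where F2: "frame1 Pc B F2" "FE F2 (b2, \<Psi>2)" using ab(2) 1(2) by blast
    obtain c1 \<Phi>1 c2 \<Phi>2 where 2: "frame1 Pc A (c1, \<Phi>1)" "frame1 Pc B (c2, \<Phi>2)" "FE F1 (c1, \<Phi>1)"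
      "FE F2 (c2, \<Phi>2)" "set c1 \<inter> (set c2 \<union> supp (swA Pc) \<Phi>2) = {}"
      "set c2 \<inter> (set c1 \<union> supp (swA Pc) \<Phi>1) = {}"
      using DISJ[OF F1(1) F2(1), of "{}"] by auto
    have "FE (c1, \<Phi>1) (b1, \<Psi>1)" "FE (c2, \<Phi>2) (b2, \<Psi>2)" using F1 F2 2 by (blast intro: FE_trans FE_sym)+
    then have "FE (c1 @ c2, comp Pc \<Phi>1 \<Phi>2) (b1 @ b2, comp Pc \<Psi>1 \<Psi>2)"
      using FE_par 1(3,4) 2(5,6) by blast
    moreover have "frame1 Pc (PPar A B) (c1 @ c2, comp Pc \<Phi>1 \<Phi>2)" using 2 by (blast intro: frame1.g_par)
    ultimately show ?thesis using 1(5) by (blast intro: FE_trans)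
  qed
  show ?case using a_par gen by blast
qed (meson frame1.intros inv_unit unitish_simps)+

lemma FO1: "frame_of Pc P F \<Longrightarrow> \<exists>F'. frame1 Pc P F' \<and> FE F' F"
proof (induct rule: frame_of.induct)
  case (f_res P bs \<Psi> x)
  then obtain F' where 2: "frame1 Pc P F'" "FE F' (bs, \<Psi>)" by blast
  have "frame1 Pc (PRes x P) (x # fst F', snd F')" using 2 by (metis frame1.g_res prod.collapse)
  moreover have "FE (x # fst F', snd F') (x # bs, \<Psi>)" using 2 by (metis FE_res prod.collapse)
  ultimately show ?case by blast
next
  case (f_par P b1 \<Psi>1 Q b2 \<Psi>2)
  obtain F1 where F1: "frame1 Pc P F1" "FE F1 (b1, \<Psi>1)" using f_par by blast
  obtain F2 where F2: "frame1 Pc Q F2" "FE F2 (b2, \<Psi>2)" using f_par by blast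
  obtain c1 \<Phi>1 c2 \<Phi>2 where 2: "frame1 Pc P (c1, \<Phi>1)" "frame1 Pc Q (c2, \<Phi>2)" "FE F1 (c1, \<Phi>1)"
    "FE F2 (c2, \<Phi>2)" "set c1 \<inter> (set c2 \<union> supp (swA Pc) \<Phi>2) = {}"
    "set c2 \<inter> (set c1 \<union> supp (swA Pc) \<Phi>1) = {}"
    using DISJ[OF F1(1) F2(1), of "{}"] by auto
  have "FE (c1, \<Phi>1) (b1, \<Psi>1)" "FE (c2, \<Phi>2) (b2, \<Psi>2)" using F1 F2 2 by (blast intro: FE_trans FE_sym)+
  then have "FE (c1 @ c2, comp Pc \<Phi>1 \<Phi>2) (b1 @ b2, comp Pc \<Psi>1 \<Psi>2)"
    using FE_par f_par(5,6) 2(5,6) by blast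
  moreover have "frame1 Pc (PPar P Q) (c1 @ c2, comp Pc \<Phi>1 \<Phi>2)" using 2 by (blast intro: frame1.g_par)
  ultimately show ?case by blast
next
  case (f_alpha P F G)
  then show ?case by (blast intro: FE_trans frame_alpha_FE)
next
  case (f_alpha_agent P Q F)
  then show ?case using L_alpha by (blast intro: FE_trans)
qed (meson frame1.intros FE_refl)+

lemma UQ: "frame_of Pc P F \<Longrightarrow> frame_of Pc P G \<Longrightarrow> FE F G"
  by (meson FO1 UQ1 FE_trans FE_sym)

end



lemma fresh_list: "finite (A :: name set) \<Longrightarrow> \<exists>bs. length bs = n \<and> distinct bs \<and> set bs \<inter> A = {}"
proof (induct n arbitrary: A)
  case 0 then show ?case by simp
next
  case (Suc n)
  obtain c where c: "c \<notin> A" using Suc.prems by (meson ex_new_if_finite infinite_UNIV_nat)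
  obtain bs where "length bs = n" "distinct bs" "set bs \<inter> (insert c A) = {}" using Suc by (meson finite_insert)
  then show ?case using c by (intro exI[of _ "c # bs"]) auto
qed

context nomset begin

lemma swap_seq_fresh: "z \<notin> supp sw X \<Longrightarrow> z \<notin> set bs \<Longrightarrow> z \<notin> set as \<Longrightarrow> z \<notin> supp sw (swap_seq sw bs as X)"
proof (induct bs arbitrary: as)
  case (Cons b bs)
  then show ?case by (cases as) (auto simp: supp_swap_iff)
qed simp

lemma swap_seq_out: "x \<in> set as \<Longrightarrow> distinct as \<Longrightarrow> distinct bs \<Longrightarrow> length bs = length as \<Longrightarrow>
   set bs \<inter> (supp sw X \<union> set as) = {} \<Longrightarrow> x \<notin> supp sw (swap_seq sw bs as X)"
proof (induct bs arbitrary: as)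
  case Nil then show ?case by simp
next
  case (Cons b bs as0)
  then obtain a as where as0: "as0 = a # as" by (cases as0) auto
  show ?case
  proof (cases "x = a")
    case True
    have "b \<notin> supp sw (swap_seq sw bs as X)"
      using Cons.prems as0 by (intro swap_seq_fresh) auto
    then show ?thesis using True as0 by (simp add: supp_swap_iff)
  next
    case False
    then have "x \<notin> supp sw (swap_seq sw bs as X)" using Cons as0 by auto
    moreover have "x \<noteq> b" using Cons.prems as0 by auto
    ultimately show ?thesis using False as0 by (simp add: supp_swap_iff)
  qed
qed

end

context psi_loc begin

lemma finite_suppTs[simp]: "finite (suppTs Pc Ts)" by (simp add: suppTs_def)

lemma subst_supp_le1: assumes "nomset sw" "subst_ok Pc sw sb"
  shows "supp sw (sb X xs Ts) \<subseteq> supp sw X \<union> set xs \<union> suppTs Pc Ts"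
proof (rule nomset.supp_le[OF assms(1)])
  show "finite (supp sw X \<union> set xs \<union> suppTs Pc Ts)" using nomset.fin_supp[OF assms(1)] by simp
next
  fix c d assume c: "c \<notin> supp sw X \<union> set xs \<union> suppTs Pc Ts" and d: "d \<notin> supp sw X \<union> set xs \<union> suppTs Pc Ts"
  have "sw c d (sb X xs Ts) = sb (sw c d X) (map (nswap c d) xs) (map (swT Pc c d) Ts)"
    using assms(2) by (simp add: subst_ok_def)
  moreover have "sw c d X = X" using c d nomset.fresh_swap[OF assms(1)] by auto
  moreover have "map (nswap c d) xs = xs" using c d by (simp add: map_nswap_fix)
  moreover have "map (swT Pc c d) Ts = Ts"
    using c d by (intro map_idI) (auto simp: suppTs_def T.fresh_swap)
  ultimately show "sw c d (sb X xs Ts) = sb X xs Ts" by simp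
qed

lemma subst_supp_le: assumes "nomset sw" "subst_ok Pc sw sb" "distinct xs" "length xs = length Ts"
  shows "supp sw (sb X xs Ts) \<subseteq> (supp sw X - set xs) \<union> suppTs Pc Ts"
proof
  fix y assume y: "y \<in> supp sw (sb X xs Ts)"
  show "y \<in> (supp sw X - set xs) \<union> suppTs Pc Ts"
  proof (rule ccontr)
    assume ny: "y \<notin> (supp sw X - set xs) \<union> suppTs Pc Ts"
    have yx: "y \<in> set xs" using ny y subst_supp_le1[OF assms(1,2)] by auto
    obtain bs where bs: "length bs = length xs" "distinct bs"
      "set bs \<inter> (supp sw X \<union> set xs \<union> suppTs Pc Ts \<union> {y}) = {}"
      using fresh_list[of "supp sw X \<union> set xs \<union> suppTs Pc Ts \<union> {y}" "length xs"]
        nomset.fin_supp[OF assms(1)] by auto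
    have "set bs \<inter> (supp sw X \<union> set xs) = {}" using bs(3) by auto
    then have eq: "sb X xs Ts = sb (swap_seq sw bs xs X) bs Ts"
      using assms(2,3,4) bs(1,2) unfolding subst_ok_def by metis
    have "y \<notin> supp sw (swap_seq sw bs xs X)"
      using bs yx assms(3) by (intro nomset.swap_seq_out[OF assms(1)]) auto
    then have "y \<notin> supp sw (sb X xs Ts)"
      using subst_supp_le1[OF assms(1,2), of "swap_seq sw bs xs X" bs Ts] eq bs ny by auto
    then show False using y by simp
  qed
qed

lemma nomsetT: "nomset (swT Pc)" by (simp add: T.nomset_axioms)
lemma nomsetC: "nomset (swC Pc)" by (simp add: C.nomset_axioms)
lemma nomsetA: "nomset (swA Pc)" by (simp add: A.nomset_axioms)

lemma agent_subst_fn: "agent_subst Pc xs Ts P P' \<Longrightarrow> distinct xs \<Longrightarrow> length xs = length Ts \<Longrightarrow>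
   fn Pc P' \<subseteq> (fn Pc P - set xs) \<union> suppTs Pc Ts"
proof (induct rule: agent_subst.induct)
  case (s_out P P' M N)
  then show ?case using subst_supp_le[OF nomsetT substT_ok, of xs Ts M]
      subst_supp_le[OF nomsetT substT_ok, of xs Ts N] by auto
next
  case (s_in ys P P' M N)
  then show ?case using subst_supp_le[OF nomsetT substT_ok, of xs Ts M]
      subst_supp_le[OF nomsetT substT_ok, of xs Ts N] by auto
next
  case (s_case cs ds)
  show ?case
  proof
    fix y assume "y \<in> fn Pc (PCase ds)"
    then obtain i where i: "i < length ds" "y \<in> supp (swC Pc) (fst (ds!i)) \<union> fn Pc (snd (ds!i))"
      unfolding fn_PCase_nth by auto
    have ic: "i < length cs" using i s_case by simp
    have "supp (swC Pc) (fst (ds!i)) \<subseteq> (supp (swC Pc) (fst (cs!i)) - set xs) \<union> suppTs Pc Ts"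
      using s_case(2) ic subst_supp_le[OF nomsetC substC_ok s_case(3,4)] by auto
    moreover have "fn Pc (snd (ds!i)) \<subseteq> (fn Pc (snd (cs!i)) - set xs) \<union> suppTs Pc Ts"
      using s_case ic by auto
    ultimately show "y \<in> (fn Pc (PCase cs) - set xs) \<union> suppTs Pc Ts"
      using i ic unfolding fn_PCase_nth by blast
  qed
next
  case (s_assert \<Psi>)
  then show ?case using subst_supp_le[OF nomsetA substA_ok, of xs Ts \<Psi>] by auto
next
  case (s_alpha P Q Q')
  then show ?case using alpha_fn by auto
qed auto

lemma deriv_fn: "psi_trans Pc \<Psi> R \<alpha> R' \<Longrightarrow> \<forall>M N. \<alpha> = AIn M N \<longrightarrow> wf_agent Pc R \<longrightarrow> fn Pc R' \<subseteq> fn Pc R \<union> supp (swT Pc) N"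
proof (induct rule: psi_trans.induct)
  case (t_in \<Psi> M K Ls ys P P' N)
  show ?case
  proof (intro allI impI)
    fix M' N' assume e: "AIn K (substT Pc N ys Ls) = AIn M' N'" and wf: "wf_agent Pc (PIn M ys N P)"
    have "fn Pc P' \<subseteq> (fn Pc P - set ys) \<union> suppTs Pc Ls"
      using agent_subst_fn[OF t_in(3)] wf t_in(2) by simp
    moreover have "suppTs Pc Ls \<subseteq> supp (swT Pc) (substT Pc N ys Ls)"
    proof
      fix b assume "b \<in> suppTs Pc Ls"
      moreover have "distinct ys" "set ys \<subseteq> supp (swT Pc) N" using wf by auto
      ultimately show "b \<in> supp (swT Pc) (substT Pc N ys Ls)"
        using substT_ok t_in(2) unfolding subst_ok_def by metis
    qed
    ultimately show "fn Pc P' \<subseteq> fn Pc (PIn M ys N P) \<union> supp (swT Pc) N'" using e by auto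
  qed
next
  case (t_case i cs \<Psi> \<alpha> P')
  have "snd (cs!i) \<in> snd ` set cs" using t_case(1) by auto
  then have "fn Pc (snd (cs!i)) \<subseteq> fn Pc (PCase cs)" and "wf_agent Pc (PCase cs) \<Longrightarrow> wf_agent Pc (snd (cs!i))"
    unfolding fn_PCase by (auto simp: map_prod_def case_prod_beta)
  then show ?case using t_case by blast
next
  case (t_alpha \<Psi> P \<alpha> P' Q \<beta> Q')
  show ?case
  proof (intro allI impI)
    fix M N assume b: "\<beta> = AIn M N" and wf: "wf_agent Pc Q"
    have r: "\<alpha> = AIn M N \<and> alpha Pc P' Q'"
      using resid_in[OF t_alpha(4)] b by (metis fst_conv snd_conv)
    have wfP: "wf_agent Pc P" using alpha_wf[OF t_alpha(3)] wf by simp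
    have "fn Pc P' \<subseteq> fn Pc P \<union> supp (swT Pc) N" using t_alpha(2) r wfP by blast
    moreover have "fn Pc P' = fn Pc Q'" using alpha_fn r by blast
    moreover have "fn Pc P = fn Pc Q" using alpha_fn t_alpha(3) by blast
    ultimately show "fn Pc Q' \<subseteq> fn Pc Q \<union> supp (swT Pc) N" by simp
  qed
next
  case (t_par Q bQ \<Psi>Q \<Psi> P \<alpha> P')
  show ?case
  proof (intro allI impI)
    fix M N assume "\<alpha> = AIn M N" "wf_agent Pc (PPar P Q)"
    then have "fn Pc P' \<subseteq> fn Pc P \<union> supp (swT Pc) N" using t_par(4) by simp
    then show "fn Pc (PPar P' Q) \<subseteq> fn Pc (PPar P Q) \<union> supp (swT Pc) N" by auto
  qed
next
  case (t_par2 P bP \<Psi>P \<Psi> Q \<alpha> Q')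
  show ?case
  proof (intro allI impI)
    fix M N assume "\<alpha> = AIn M N" "wf_agent Pc (PPar P Q)"
    then have "fn Pc Q' \<subseteq> fn Pc Q \<union> supp (swT Pc) N" using t_par2(4) by simp
    then show "fn Pc (PPar P Q') \<subseteq> fn Pc (PPar P Q) \<union> supp (swT Pc) N" by auto
  qed
next
  case (t_scope \<Psi> P \<alpha> P' b)
  show ?case
  proof (intro allI impI)
    fix M N assume "\<alpha> = AIn M N" "wf_agent Pc (PRes b P)"
    then have "fn Pc P' \<subseteq> fn Pc P \<union> supp (swT Pc) N" using t_scope(2) by simp
    then show "fn Pc (PRes b P') \<subseteq> fn Pc (PRes b P) \<union> supp (swT Pc) N" by auto
  qed
next
  case (t_rep \<Psi> P \<alpha> P')
  then show ?case by simp
next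
  case (t_out \<Psi> M K N P)
  show ?case by simp
next
  case t_com
  show ?case by simp
next
  case t_com2
  show ?case by simp
next
  case t_open
  show ?case by simp
qed

end



context psi_loc begin

definition Good :: "('t, 'c, 'a) agent \<Rightarrow> 'a frame \<Rightarrow> bool" where
  "Good R' F \<longleftrightarrow> (\<forall>C. finite C \<longrightarrow> set (fst F) \<inter> C = {} \<longrightarrow>
     (\<exists>\<Psi>' H. frame_of Pc R' H \<and> aeq Pc (comp Pc (snd F) \<Psi>') (snd H) \<and> set (fst H) \<inter> (C \<union> fn Pc R') = {}))"

lemma Good_unit: "Good R' ([], unitA Pc)"
  unfolding Good_def
proof (intro allI impI)
  fix C :: "name set" assume "finite C"
  then obtain bs \<Psi> where "frame_of Pc R' (bs, \<Psi>)" "set bs \<inter> (C \<union> fn Pc R') = {}"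
    using frame_exists[of "C \<union> fn Pc R'" R'] by auto
  then show "\<exists>\<Psi>' H. frame_of Pc R' H \<and> aeq Pc (comp Pc (snd ([], unitA Pc)) \<Psi>') (snd H) \<and>
      set (fst H) \<inter> (C \<union> fn Pc R') = {}"
    by (intro exI[of _ \<Psi>] exI[of _ "(bs, \<Psi>)"]) (simp add: aeq_unitl)
qed

lemma Good_alpha: "alpha Pc P' Q' \<Longrightarrow> Good P' F \<Longrightarrow> Good Q' F"
  unfolding Good_def using alpha_fn
  by (metis alpha.a_sym frame_of.f_alpha_agent)

lemma Good_swap: assumes "Good R' F" "a \<notin> fn Pc R'" "c \<notin> fn Pc R'"
  shows "Good R' (swap_frame Pc a c F)"
  unfolding Good_def
proof (intro allI impI)
  fix C :: "name set" assume C: "finite C" "set (fst (swap_frame Pc a c F)) \<inter> C = {}"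
  define C' where "C' = nswap a c ` C"
  have "finite C'" using C by (simp add: C'_def)
  moreover have "set (fst F) \<inter> C' = {}"
    using C(2) by (auto simp: C'_def swap_frame_def nswap_in_image)
  ultimately obtain \<Psi>' H where H: "frame_of Pc R' H" "aeq Pc (comp Pc (snd F) \<Psi>') (snd H)"
    "set (fst H) \<inter> (C' \<union> fn Pc R') = {}" using assms(1) unfolding Good_def by blast
  have fH: "fn_frame Pc H \<subseteq> fn Pc R'" by (rule frame_of_supp[OF H(1)])
  have "frame_of Pc R' (swap_frame Pc a c H)"
    using H(1) fH assms(2,3) by (blast intro: frame_of.f_alpha frame_alpha.fa_swap)
  moreover have "aeq Pc (comp Pc (snd (swap_frame Pc a c F)) (swA Pc a c \<Psi>')) (snd (swap_frame Pc a c H))"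
    using aeq_swap[OF H(2), of a c] by (simp add: swap_frame_def comp_eqvt)
  moreover have "set (fst (swap_frame Pc a c H)) \<inter> (C \<union> fn Pc R') = {}"
  proof -
    have "nswap a c ` fn Pc R' = fn Pc R'" using assms(2,3) by (rule nswap_image_fix)
    then show ?thesis using H(3) by (auto simp: C'_def swap_frame_def nswap_in_image)
  qed
  ultimately show "\<exists>\<Psi>' H. frame_of Pc R' H \<and> aeq Pc (comp Pc (snd (swap_frame Pc a c F)) \<Psi>') (snd H) \<and>
      set (fst H) \<inter> (C \<union> fn Pc R') = {}" by blast
qed

lemma Eform: "psi_trans Pc \<Psi> R \<alpha> R' \<Longrightarrow> \<forall>M N. \<alpha> = AIn M N \<longrightarrow>
   (\<forall>D. finite D \<longrightarrow> (\<exists>F. frame_of Pc R F \<and> set (fst F) \<inter> D = {} \<and> Good R' F))"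
proof (induct rule: psi_trans.induct)
  case (t_in \<Psi> M K Ls ys P P' N)
  then show ?case using Good_unit frame_of.f_in by fastforce
next
  case (t_case i cs \<Psi> \<alpha> P')
  then show ?case using Good_unit frame_of.f_case by fastforce
next
  case (t_rep \<Psi> P \<alpha> P')
  then show ?case using Good_unit frame_of.f_bang by fastforce
next
  case (t_out \<Psi> M K N P)
  show ?case by simp
next
  case t_com
  show ?case by simp
next
  case t_com2
  show ?case by simp
next
  case t_open
  show ?case by simp
next
  case (t_alpha \<Psi> P \<alpha> P' Q \<beta> Q')
  show ?case
  proof (intro allI impI)
    fix M N D assume b: "\<beta> = AIn M N" and D: "finite (D :: name set)"
    have r: "\<alpha> = AIn M N \<and> alpha Pc P' Q'"
      using resid_in[OF t_alpha(4)] b by (metis fst_conv snd_conv)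
    then obtain F where F: "frame_of Pc P F" "set (fst F) \<inter> D = {}" "Good P' F"
      using t_alpha(2) D by blast
    have "frame_of Pc Q F" using F(1) t_alpha(3) by (blast intro: frame_of.f_alpha_agent alpha.a_sym)
    moreover have "Good Q' F" using Good_alpha r F(3) by blast
    ultimately show "\<exists>F. frame_of Pc Q F \<and> set (fst F) \<inter> D = {} \<and> Good Q' F" using F(2) by blast
  qed
next
  case (t_scope \<Psi> P \<alpha> P' b)
  show ?case
  proof (intro allI impI)
    fix M N D assume a: "\<alpha> = AIn M N" and D: "finite (D :: name set)"
    obtain bp \<psi>p where FP: "frame_of Pc P (bp, \<psi>p)" "set bp \<inter> (D \<union> {b} \<union> fn Pc P') = {}"
      "Good P' (bp, \<psi>p)"
      using t_scope(2) a D by (metis finite_Un finite_fn finite.emptyI finite_insert fst_conv prod.collapse)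
    define F0 where "F0 = (b # bp, \<psi>p)"
    have fF0: "frame_of Pc (PRes b P) F0" using FP(1) by (simp add: F0_def frame_of.f_res)
    have gF0: "Good (PRes b P') F0"
      unfolding Good_def
    proof (intro allI impI)
      fix C :: "name set" assume C: "finite C" "set (fst F0) \<inter> C = {}"
      then have "set bp \<inter> (C \<union> {b}) = {}" using FP(2) by (auto simp: F0_def)
      then obtain \<Psi>' bh \<psi>h where H: "frame_of Pc P' (bh, \<psi>h)" "aeq Pc (comp Pc \<psi>p \<Psi>') \<psi>h"
        "set bh \<inter> (C \<union> {b} \<union> fn Pc P') = {}"
        using FP(3) C(1) unfolding Good_def by (metis finite_Un finite.emptyI finite_insert fst_conv snd_conv prod.collapse)
      have "frame_of Pc (PRes b P') (b # bh, \<psi>h)" using H(1) by (rule frame_of.f_res)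
      moreover have "set (b # bh) \<inter> (C \<union> fn Pc (PRes b P')) = {}" using H(3) C(2) by (auto simp: F0_def)
      ultimately show "\<exists>\<Psi>' H. frame_of Pc (PRes b P') H \<and> aeq Pc (comp Pc (snd F0) \<Psi>') (snd H) \<and>
          set (fst H) \<inter> (C \<union> fn Pc (PRes b P')) = {}"
        using H(2) by (intro exI[of _ \<Psi>'] exI[of _ "(b # bh, \<psi>h)"]) (simp add: F0_def)
    qed
    have "finite (D \<union> {b} \<union> set bp \<union> supp (swA Pc) \<psi>p \<union> fn Pc P')" using D by simp
    then obtain c where c: "c \<notin> D \<union> {b} \<union> set bp \<union> supp (swA Pc) \<psi>p \<union> fn Pc P'"
      by (metis ex_new_if_finite infinite_UNIV_nat)
    define F where "F = swap_frame Pc b c F0"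
    have "frame_of Pc (PRes b P) F"
      unfolding F_def using fF0 c
      by (intro frame_of.f_alpha[OF fF0] frame_alpha.fa_swap) (auto simp: F0_def fn_frame_def)
    moreover have "set (fst F) \<inter> D = {}"
    proof -
      have "map (nswap b c) bp = bp" using FP(2) c by (intro map_nswap_fix) auto
      then show ?thesis using FP(2) c by (auto simp: F_def F0_def swap_frame_def)
    qed
    moreover have "Good (PRes b P') F" unfolding F_def using c by (intro Good_swap[OF gF0]) auto
    ultimately show "\<exists>F. frame_of Pc (PRes b P) F \<and> set (fst F) \<inter> D = {} \<and> Good (PRes b P') F" by blast
  qed
next
  case (t_par Q bQ \<Psi>Q \<Psi> P \<alpha> P')
  show ?case
  proof (intro allI impI)
    fix M N D assume a: "\<alpha> = AIn M N" and D: "finite (D :: name set)"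
    obtain bq \<psi>q where Fq: "frame_of Pc Q (bq, \<psi>q)" "set bq \<inter> (D \<union> fn Pc P \<union> fn Pc P' \<union> fn Pc Q) = {}"
      using frame_exists[of "D \<union> fn Pc P \<union> fn Pc P' \<union> fn Pc Q" Q] D by auto
    have "finite (D \<union> set bq \<union> supp (swA Pc) \<psi>q \<union> fn Pc Q)" using D by simp
    then obtain bp \<psi>p where FP: "frame_of Pc P (bp, \<psi>p)" "set bp \<inter> (D \<union> set bq \<union> supp (swA Pc) \<psi>q \<union> fn Pc Q) = {}"
      "Good P' (bp, \<psi>p)"
      using t_par(4) a by (metis fst_conv prod.collapse)
    have sp: "supp (swA Pc) \<psi>p \<subseteq> fn Pc P \<union> set bp" by (rule frame_of_supp'[OF FP(1)])
    have fF: "frame_of Pc (PPar P Q) (bp @ bq, comp Pc \<psi>p \<psi>q)"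
      by (rule frame_of.f_par[OF FP(1) Fq(1)]) (use FP(2) Fq(2) sp in auto)
    have gF: "Good (PPar P' Q) (bp @ bq, comp Pc \<psi>p \<psi>q)"
      unfolding Good_def
    proof (intro allI impI)
      fix C :: "name set" assume C: "finite C" "set (fst (bp @ bq, comp Pc \<psi>p \<psi>q)) \<inter> C = {}"
      then have "set bp \<inter> (C \<union> set bq \<union> supp (swA Pc) \<psi>q \<union> fn Pc Q) = {}" using FP(2) by auto
      moreover have "finite (C \<union> set bq \<union> supp (swA Pc) \<psi>q \<union> fn Pc Q)" using C by simp
      ultimately obtain \<Psi>' bh \<psi>h where H: "frame_of Pc P' (bh, \<psi>h)" "aeq Pc (comp Pc \<psi>p \<Psi>') \<psi>h"
        "set bh \<inter> ((C \<union> set bq \<union> supp (swA Pc) \<psi>q \<union> fn Pc Q) \<union> fn Pc P') = {}"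
        using FP(3) unfolding Good_def by (metis fst_conv snd_conv prod.collapse)
      have sh: "supp (swA Pc) \<psi>h \<subseteq> fn Pc P' \<union> set bh" by (rule frame_of_supp'[OF H(1)])
      have "frame_of Pc (PPar P' Q) (bh @ bq, comp Pc \<psi>h \<psi>q)"
        by (rule frame_of.f_par[OF H(1) Fq(1)]) (use H(3) Fq(2) sh in auto)
      moreover have "aeq Pc (comp Pc (comp Pc \<psi>p \<psi>q) \<Psi>') (comp Pc \<psi>h \<psi>q)"
      proof -
        have 1: "aeq Pc (comp Pc (comp Pc \<psi>p \<psi>q) \<Psi>') (comp Pc \<psi>p (comp Pc \<psi>q \<Psi>'))" by (rule aeq_assoc)
        have 2: "aeq Pc (comp Pc \<psi>p (comp Pc \<psi>q \<Psi>')) (comp Pc \<psi>p (comp Pc \<Psi>' \<psi>q))" by (intro aeq_compr aeq_comm)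
        have 3: "aeq Pc (comp Pc \<psi>p (comp Pc \<Psi>' \<psi>q)) (comp Pc (comp Pc \<psi>p \<Psi>') \<psi>q)" by (intro aeq_sym[OF aeq_assoc])
        have 4: "aeq Pc (comp Pc (comp Pc \<psi>p \<Psi>') \<psi>q) (comp Pc \<psi>h \<psi>q)" by (intro aeq_compl H(2))
        show ?thesis using aeq_trans[OF aeq_trans[OF aeq_trans[OF 1 2] 3] 4] .
      qed
      moreover have "set (bh @ bq) \<inter> (C \<union> fn Pc (PPar P' Q)) = {}" using H(3) Fq(2) C(2) by auto
      ultimately show "\<exists>\<Psi>' H. frame_of Pc (PPar P' Q) H \<and>
          aeq Pc (comp Pc (snd (bp @ bq, comp Pc \<psi>p \<psi>q)) \<Psi>') (snd H) \<and>
          set (fst H) \<inter> (C \<union> fn Pc (PPar P' Q)) = {}"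
        by (intro exI[of _ \<Psi>'] exI[of _ "(bh @ bq, comp Pc \<psi>h \<psi>q)"]) simp
    qed
    show "\<exists>F. frame_of Pc (PPar P Q) F \<and> set (fst F) \<inter> D = {} \<and> Good (PPar P' Q) F"
      using fF gF FP(2) Fq(2) by (intro exI[of _ "(bp @ bq, comp Pc \<psi>p \<psi>q)"]) auto
  qed
next
  case (t_par2 P bP \<Psi>P \<Psi> Q \<alpha> Q')
  show ?case
  proof (intro allI impI)
    fix M N D assume a: "\<alpha> = AIn M N" and D: "finite (D :: name set)"
    obtain bp \<psi>p where Fp: "frame_of Pc P (bp, \<psi>p)" "set bp \<inter> (D \<union> fn Pc Q \<union> fn Pc Q' \<union> fn Pc P) = {}"
      using frame_exists[of "D \<union> fn Pc Q \<union> fn Pc Q' \<union> fn Pc P" P] D by auto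
    have "finite (D \<union> set bp \<union> supp (swA Pc) \<psi>p \<union> fn Pc P)" using D by simp
    then obtain bq \<psi>q where FQ: "frame_of Pc Q (bq, \<psi>q)" "set bq \<inter> (D \<union> set bp \<union> supp (swA Pc) \<psi>p \<union> fn Pc P) = {}"
      "Good Q' (bq, \<psi>q)"
      using t_par2(4) a by (metis fst_conv prod.collapse)
    have sq: "supp (swA Pc) \<psi>q \<subseteq> fn Pc Q \<union> set bq" by (rule frame_of_supp'[OF FQ(1)])
    have fF: "frame_of Pc (PPar P Q) (bp @ bq, comp Pc \<psi>p \<psi>q)"
      by (rule frame_of.f_par[OF Fp(1) FQ(1)]) (use FQ(2) Fp(2) sq in auto)
    have gF: "Good (PPar P Q') (bp @ bq, comp Pc \<psi>p \<psi>q)"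
      unfolding Good_def
    proof (intro allI impI)
      fix C :: "name set" assume C: "finite C" "set (fst (bp @ bq, comp Pc \<psi>p \<psi>q)) \<inter> C = {}"
      then have "set bq \<inter> (C \<union> set bp \<union> supp (swA Pc) \<psi>p \<union> fn Pc P) = {}" using FQ(2) by auto
      moreover have "finite (C \<union> set bp \<union> supp (swA Pc) \<psi>p \<union> fn Pc P)" using C by simp
      ultimately obtain \<Psi>' bh \<psi>h where H: "frame_of Pc Q' (bh, \<psi>h)" "aeq Pc (comp Pc \<psi>q \<Psi>') \<psi>h"
        "set bh \<inter> ((C \<union> set bp \<union> supp (swA Pc) \<psi>p \<union> fn Pc P) \<union> fn Pc Q') = {}"
        using FQ(3) unfolding Good_def by (metis fst_conv snd_conv prod.collapse)
      have sh: "supp (swA Pc) \<psi>h \<subseteq> fn Pc Q' \<union> set bh" by (rule frame_of_supp'[OF H(1)])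
      have "frame_of Pc (PPar P Q') (bp @ bh, comp Pc \<psi>p \<psi>h)"
        by (rule frame_of.f_par[OF Fp(1) H(1)]) (use H(3) Fp(2) sh in auto)
      moreover have "aeq Pc (comp Pc (comp Pc \<psi>p \<psi>q) \<Psi>') (comp Pc \<psi>p \<psi>h)"
      proof -
        have 1: "aeq Pc (comp Pc (comp Pc \<psi>p \<psi>q) \<Psi>') (comp Pc \<psi>p (comp Pc \<psi>q \<Psi>'))" by (rule aeq_assoc)
        have 2: "aeq Pc (comp Pc \<psi>p (comp Pc \<psi>q \<Psi>')) (comp Pc \<psi>p \<psi>h)" by (intro aeq_compr H(2))
        show ?thesis using aeq_trans[OF 1 2] .
      qed
      moreover have "set (bp @ bh) \<inter> (C \<union> fn Pc (PPar P Q')) = {}" using H(3) Fp(2) C(2) by auto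
      ultimately show "\<exists>\<Psi>' H. frame_of Pc (PPar P Q') H \<and>
          aeq Pc (comp Pc (snd (bp @ bq, comp Pc \<psi>p \<psi>q)) \<Psi>') (snd H) \<and>
          set (fst H) \<inter> (C \<union> fn Pc (PPar P Q')) = {}"
        by (intro exI[of _ \<Psi>'] exI[of _ "(bp @ bh, comp Pc \<psi>p \<psi>h)"]) simp
    qed
    show "\<exists>F. frame_of Pc (PPar P Q) F \<and> set (fst F) \<inter> D = {} \<and> Good (PPar P Q') F"
      using fF gF FQ(2) Fp(2) by (intro exI[of _ "(bp @ bq, comp Pc \<psi>p \<psi>q)"]) auto
  qed
qed

end



theorem mainTheorem8:
  fixes Pc :: "('t, 'c, 'a) psi"
    and \<Psi> \<Psi>R :: 'a
    and R R' :: "('t, 'c, 'a) agent"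
    and M N :: 't
    and bR :: "name list"
    and C :: "name set"
  assumes "psi_calculus Pc"
    and "wf_agent Pc R"
    and "psi_trans Pc \<Psi> R (AIn M N) R'"
    and "frame_of Pc R (bR, \<Psi>R)"
    and "finite C"
    and "set bR \<inter> fn Pc R = {}"
    and "set bR \<inter> supp (swT Pc) N = {}"
    and "set bR \<inter> C = {}"
  shows "\<exists>\<Psi>' bR' \<Psi>R'. frame_of Pc R' (bR', \<Psi>R') \<and> aeq Pc (comp Pc \<Psi>R \<Psi>') \<Psi>R' \<and>
           set bR' \<inter> C = {} \<and> set bR' \<inter> fn Pc R' = {}"
proof -
  interpret psi_loc Pc by (unfold_locales) (rule assms(1))
  define D0 where "D0 = C \<union> fn Pc R \<union> supp (swT Pc) N \<union> fn Pc R' \<union> set bR \<union> supp (swA Pc) \<Psi>R"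
  have fD0: "finite D0" using assms(5) by (simp add: D0_def)
  obtain F0 where F0: "frame_of Pc R F0" "set (fst F0) \<inter> D0 = {}" "Good R' F0"
    using Eform[OF assms(3)] fD0 by blast
  have fe: "FE F0 (bR, \<Psi>R)" by (rule UQ[OF F0(1) assms(4)])
  define U where "U = fn_frame Pc F0"
  have U2: "U = fn_frame Pc (bR, \<Psi>R)" using fe by (simp add: FE_def U_def)
  obtain q where q: "\<Psi>R = actA Pc q (snd F0)" "names q \<inter> U = {}"
    using fe by (auto simp: FE_def U_def)
  have der: "fn Pc R' \<subseteq> fn Pc R \<union> supp (swT Pc) N" using deriv_fn[OF assms(3)] assms(2) by blast
  define S where "S = C \<union> fn Pc R'"
  have fS: "finite S" using assms(5) by (simp add: S_def)
  have "\<exists>q'. actA Pc q' (snd F0) = actA Pc q (snd F0) \<and> names q' \<inter> S = {} \<and> names q' \<inter> U \<subseteq> names q"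
  proof (rule K_lemma[OF fS])
    show "finite U" by (simp add: U_def fn_frame_def)
    show "\<forall>a\<in>names q \<inter> S. a \<notin> supp (swA Pc) (snd F0) \<and> a \<notin> supp (swA Pc) (actA Pc q (snd F0))"
    proof (intro ballI conjI)
      fix a assume a: "a \<in> names q \<inter> S"
      then have aU: "a \<notin> U" using q(2) by auto
      show "a \<notin> supp (swA Pc) (snd F0)"
      proof
        assume "a \<in> supp (swA Pc) (snd F0)"
        then have "a \<in> set (fst F0)" using aU by (auto simp: U_def fn_frame_def)
        then show False using a F0(2) by (auto simp: S_def D0_def)
      qed
      show "a \<notin> supp (swA Pc) (actA Pc q (snd F0))"
      proof
        assume "a \<in> supp (swA Pc) (actA Pc q (snd F0))"
        then have "a \<in> set bR" using aU q(1) U2 by (auto simp: fn_frame_def)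
        then show False using a der assms(6,7,8) by (auto simp: S_def)
      qed
    qed
  qed
  then obtain q' where q': "actA Pc q' (snd F0) = \<Psi>R" "names q' \<inter> S = {}" "names q' \<inter> U = {}"
    using q by auto
  have c0: "set (fst F0) \<inter> C = {}" using F0(2) by (auto simp: D0_def)
  obtain \<Psi>' H0 where H0: "frame_of Pc R' H0" "aeq Pc (comp Pc (snd F0) \<Psi>') (snd H0)"
    "set (fst H0) \<inter> (C \<union> fn Pc R') = {}"
    using F0(3)[unfolded Good_def, rule_format, OF assms(5) c0] by blast
  have fH0: "fn_frame Pc H0 \<subseteq> S" using frame_of_supp[OF H0(1)] by (auto simp: S_def)
  have "names q' \<inter> fn_frame Pc H0 = {}" using q'(2) fH0 by auto
  then have "frame_alpha Pc H0 (actF Pc q' H0)" using actF_frame_alpha by blast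
  then have fr: "frame_of Pc R' (actF Pc q' H0)" using H0(1) frame_of.f_alpha by blast
  have ae: "aeq Pc (comp Pc \<Psi>R (actA Pc q' \<Psi>')) (snd (actF Pc q' H0))"
    using aeq_actA[OF H0(2), of q'] q'(1) by (simp add: actA_comp snd_actF)
  have fs: "set (fst (actF Pc q' H0)) \<inter> S = {}" using actF_fst[of H0 S q'] H0(3) q'(2) by (simp add: S_def)
  have fr': "frame_of Pc R' (fst (actF Pc q' H0), snd (actF Pc q' H0))" using fr by simp
  show ?thesis using fr' ae fs unfolding S_def by blast
qed


end
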